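(* Let $0<p\le1$ and let $\phi$ be an Orlicz function with $\alpha_\phi>0$. The following are equivalent: (i) $\phi$ satisfies condition $\Delta^{*p}$; (ii) the Orlicz space $L_\phi$ is $p$-normable; (iii) $L_\phi$ has type $p$.
   Context: $(\Omega,\Sigma,\mu)$ is one of: (A) a non-atomic measure space with $\mu(\Omega)=\infty$; (B) a non-atomic measure space with $\mu(\Omega)<\infty$; (C) $\mathbb{N}$ with counting measure. Growth conditions and indices are taken for all arguments in case (A), for large arguments in case (B), and for small arguments in case (C). An Orlicz function is $\phi:[0,\infty)\to[0,\infty)$ with $\phi(0)=0$, strictly increasing, continuous, $\lim_{u\to\infty}\phi(u)=\infty$. $\phi\in\Delta^{*p}$ means there exist $K>0$ (and $v\ge0$ in case (B), $v>0$ in case (C)) with $\phi(au)\ge Ka^p\phi(u)$ for all $a\ge1$ and all $u\ge0$ (A), $u\ge v$ (B), $au\le v$ (C). $\alpha_\phi=\sup\{r:\exists c>0$ (and $v$) with $\phi(au)\ge ca^r\phi(u)$ for all $a\ge1$ and $u\ge0$ (A), $u\ge v$ (B), $0<u\le au\le v$ (C)$\}$. $L_\phi$ is the set of measurable $f$ with $\int\phi(\lambda|f|)\,d\mu<\infty$ for some $\lambda>0$, quasi-normed by $\|f\|=\inf\{\varepsilon>0:\int\phi(|f|/\varepsilon)\,d\mu\le1\}$. A quasi-Banach space is $p$-normable if there is $C>0$ with $\|x_1+\dots+x_n\|\le C(\|x_1\|^p+\dots+\|x_n\|^p)^{1/p}$ for all $x_1,\dots,x_n$, $n\in\mathbb{N}$.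 With Rademacher functions $r_k(t)=\operatorname{sign}(\sin2^k\pi t)$, $X$ has type $p$ if there is $K>0$ with $\int_0^1\|\sum_{k=1}^n r_k(t)x_k\|\,dt\le K(\sum_{k=1}^n\|x_k\|^p)^{1/p}$ for all $x_1,\dots,x_n\in X$. *)

theory Defs
  imports "HOL-Analysis.Analysis"
begin

datatype mcase = CaseA | CaseB | CaseC

definition nonatomic :: "'a measure \<Rightarrow> bool" where
  "nonatomic M \<longleftrightarrow> (\<forall>A\<in>sets M. emeasure M A > 0 \<longrightarrow>
      (\<exists>B\<in>sets M. B \<subseteq> A \<and> 0 < emeasure M B \<and> emeasure M B < emeasure M A))"

text \<open>Case (C): M is (isomorphic to) the counting measure on the naturals.\<close>
definition measure_setting :: "mcase \<Rightarrow> 'a measure \<Rightarrow> bool" where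
  "measure_setting c M = (case c of
      CaseA \<Rightarrow> nonatomic M \<and> emeasure M (space M) = \<infinity>
    | CaseB \<Rightarrow> nonatomic M \<and> 0 < emeasure M (space M) \<and> emeasure M (space M) < \<infinity>
    | CaseC \<Rightarrow> (\<exists>g :: nat \<Rightarrow> 'a. bij g) \<and> M = count_space UNIV)"

definition orlicz_function :: "(real \<Rightarrow> real) \<Rightarrow> bool" where
  "orlicz_function \<phi> \<longleftrightarrow> \<phi> 0 = 0 \<and> strict_mono_on {0..} \<phi> \<and> continuous_on {0..} \<phi>
      \<and> filterlim \<phi> at_top at_top"

definition growth_cond :: "mcase \<Rightarrow> (real \<Rightarrow> real) \<Rightarrow> real \<Rightarrow> real \<Rightarrow> bool" where
  "growth_cond c \<phi> K r = (case c of
      CaseA \<Rightarrow> (\<forall>a\<ge>1. \<forall>u\<ge>0. \<phi> (a * u) \<ge> K * a powr r * \<phi> u)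
    | CaseB \<Rightarrow> (\<exists>v\<ge>0. \<forall>a\<ge>1. \<forall>u\<ge>v. \<phi> (a * u) \<ge> K * a powr r * \<phi> u)
    | CaseC \<Rightarrow> (\<exists>v>0. \<forall>a\<ge>1. \<forall>u>0. a * u \<le> v \<longrightarrow> \<phi> (a * u) \<ge> K * a powr r * \<phi> u))"

definition delta_star :: "mcase \<Rightarrow> real \<Rightarrow> (real \<Rightarrow> real) \<Rightarrow> bool" where
  "delta_star c p \<phi> \<longleftrightarrow> (\<exists>K>0. growth_cond c \<phi> K p)"

definition alpha_index :: "mcase \<Rightarrow> (real \<Rightarrow> real) \<Rightarrow> ereal" where
  "alpha_index c \<phi> = Sup (ereal ` {r. \<exists>C>0. growth_cond c \<phi> C r})"

definition orlicz_space :: "'a measure \<Rightarrow> (real \<Rightarrow> real) \<Rightarrow> ('a \<Rightarrow> real) set" where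
  "orlicz_space M \<phi> = {f \<in> borel_measurable M.
      \<exists>l>0. (\<integral>\<^sup>+ x. ennreal (\<phi> (l * \<bar>f x\<bar>)) \<partial>M) < \<infinity>}"

definition orlicz_norm :: "'a measure \<Rightarrow> (real \<Rightarrow> real) \<Rightarrow> ('a \<Rightarrow> real) \<Rightarrow> real" where
  "orlicz_norm M \<phi> f = Inf {\<epsilon>. \<epsilon> > 0 \<and> (\<integral>\<^sup>+ x. ennreal (\<phi> (\<bar>f x\<bar> / \<epsilon>)) \<partial>M) \<le> 1}"

definition p_normable :: "('a \<Rightarrow> real) set \<Rightarrow> (('a \<Rightarrow> real) \<Rightarrow> real) \<Rightarrow> real \<Rightarrow> bool" where
  "p_normable X nrm p \<longleftrightarrow> (\<exists>C>0. \<forall>n::nat. \<forall>x::nat \<Rightarrow> 'a \<Rightarrow> real.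
      (\<forall>k\<in>{1..n}. x k \<in> X) \<longrightarrow>
      nrm (\<lambda>\<omega>. \<Sum>k=1..n. x k \<omega>) \<le> C * (\<Sum>k=1..n. nrm (x k) powr p) powr (1 / p))"

definition rademacher :: "nat \<Rightarrow> real \<Rightarrow> real" where
  "rademacher k t = sgn (sin (2 ^ k * pi * t))"

definition has_type :: "('a \<Rightarrow> real) set \<Rightarrow> (('a \<Rightarrow> real) \<Rightarrow> real) \<Rightarrow> real \<Rightarrow> bool" where
  "has_type X nrm p \<longleftrightarrow> (\<exists>K>0. \<forall>n::nat. \<forall>x::nat \<Rightarrow> 'a \<Rightarrow> real.
      (\<forall>k\<in>{1..n}. x k \<in> X) \<longrightarrow>
      (\<integral>\<^sup>+ t. ennreal (nrm (\<lambda>\<omega>. \<Sum>k=1..n. rademacher k t * x k \<omega>)) * indicator {0..1} t \<partial>lborel)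
        \<le> ennreal (K * (\<Sum>k=1..n. nrm (x k) powr p) powr (1 / p)))"

end

theory Submission
  imports Defs
begin


section \<open>Basic facts on Orlicz functions\<close>

lemma orl_zero: "orlicz_function \<phi> \<Longrightarrow> \<phi> 0 = 0"
  by (simp add: orlicz_function_def)

lemma orl_less: assumes "orlicz_function \<phi>" "0 \<le> x" "x < y" shows "\<phi> x < \<phi> y"
  using assms unfolding orlicz_function_def strict_mono_on_def by auto

lemma orl_mono: assumes "orlicz_function \<phi>" "0 \<le> x" "x \<le> y" shows "\<phi> x \<le> \<phi> y"
  using orl_less[OF assms(1,2), of y] assms(3) by (cases "x = y") auto

lemma orl_nonneg: assumes "orlicz_function \<phi>" "0 \<le> x" shows "0 \<le> \<phi> x"
  using orl_mono[OF assms(1) order_refl assms(2)] orl_zero[OF assms(1)] by simp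

lemma orl_le_iff: assumes "orlicz_function \<phi>" "0 \<le> x" "0 \<le> y" shows "\<phi> x \<le> \<phi> y \<longleftrightarrow> x \<le> y"
  using orl_less[OF assms(1) assms(3), of x] orl_mono[OF assms(1,2), of y] by force

lemma orl_cont: "orlicz_function \<phi> \<Longrightarrow> continuous_on {0..} \<phi>"
  by (simp add: orlicz_function_def)

lemma orl_meas:
  assumes "orlicz_function \<phi>" "g \<in> borel_measurable M" "\<And>x. 0 \<le> g x"
  shows "(\<lambda>x. \<phi> (g x)) \<in> borel_measurable M"
proof -
  have c: "continuous_on UNIV (\<lambda>x. \<phi> (max 0 x))"
    by (rule continuous_on_compose2[OF orl_cont[OF assms(1)]]) (auto intro!: continuous_intros)
  have "(\<lambda>x. \<phi> (max 0 (g x))) \<in> borel_measurable M"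
    by (rule borel_measurable_continuous_on[OF c assms(2)])
  moreover have "\<And>x. max 0 (g x) = g x" using assms(3) by simp
  ultimately show ?thesis by simp
qed

lemma orl_small:
  assumes "orlicz_function \<phi>" "e > 0"
  shows "\<exists>d>0. \<forall>x. 0 \<le> x \<and> x \<le> d \<longrightarrow> \<phi> x < e"
proof -
  have "continuous (at 0 within {0..}) \<phi>"
    using orl_cont[OF assms(1)] by (simp add: continuous_on_eq_continuous_within)
  then obtain d where d: "d > 0" "\<And>x. x \<in> {0..} \<Longrightarrow> dist x 0 < d \<Longrightarrow> dist (\<phi> x) (\<phi> 0) < e"
    unfolding continuous_within_eps_delta using assms(2) by blast
  show ?thesis
  proof (rule exI[of _ "d/2"], intro conjI allI impI)
    fix x assume x: "0 \<le> x \<and> x \<le> d/2"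
    then have "dist (\<phi> x) (\<phi> 0) < e" using d by (intro d(2)) (auto simp: dist_real_def)
    then show "\<phi> x < e" using orl_zero[OF assms(1)] by (simp add: dist_real_def)
  qed (use d in auto)
qed

lemma orl_large:
  assumes "orlicz_function \<phi>"
  shows "\<exists>v>0. \<phi> v > B"
proof -
  have "filterlim \<phi> at_top at_top" using assms by (simp add: orlicz_function_def)
  then have "eventually (\<lambda>x. \<phi> x > B) at_top" by (simp add: filterlim_at_top_dense)
  then obtain x0 where "\<And>x. x \<ge> x0 \<Longrightarrow> \<phi> x > B" by (auto simp: eventually_at_top_linorder)
  then show ?thesis by (intro exI[of _ "max 1 x0"]) auto
qed

section \<open>Basic facts on the Luxemburg quasi-norm\<close>

lemma onorm_abs_cong:
  assumes "\<And>x. \<bar>f x\<bar> = \<bar>g x\<bar>"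
  shows "orlicz_norm M \<phi> f = orlicz_norm M \<phi> g"
  unfolding orlicz_norm_def using assms by simp

lemma onorm_le:
  assumes "e > 0" "(\<integral>\<^sup>+ x. ennreal (\<phi> (\<bar>f x\<bar> / e)) \<partial>M) \<le> 1"
  shows "orlicz_norm M \<phi> f \<le> e"
  unfolding orlicz_norm_def
  by (rule cInf_lower) (use assms in \<open>auto intro: bdd_belowI[of _ 0]\<close>)

lemma onorm_gt:
  assumes phi: "orlicz_function \<phi>"
    and ne: "\<exists>e>0. (\<integral>\<^sup>+ x. ennreal (\<phi> (\<bar>f x\<bar> / e)) \<partial>M) \<le> 1"
    and lt: "orlicz_norm M \<phi> f < e"
  shows "(\<integral>\<^sup>+ x. ennreal (\<phi> (\<bar>f x\<bar> / e)) \<partial>M) \<le> 1"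
proof -
  let ?S = "{\<epsilon>. \<epsilon> > 0 \<and> (\<integral>\<^sup>+ x. ennreal (\<phi> (\<bar>f x\<bar> / \<epsilon>)) \<partial>M) \<le> 1}"
  have "?S \<noteq> {}" using ne by auto
  moreover have "bdd_below ?S" by (auto intro: bdd_belowI[of _ 0])
  ultimately obtain e' where e': "e' \<in> ?S" "e' < e"
    using lt cInf_less_iff[of ?S e] unfolding orlicz_norm_def by auto
  have "(\<integral>\<^sup>+ x. ennreal (\<phi> (\<bar>f x\<bar> / e)) \<partial>M) \<le> (\<integral>\<^sup>+ x. ennreal (\<phi> (\<bar>f x\<bar> / e')) \<partial>M)"
  proof (rule nn_integral_mono)
    fix x
    have "\<bar>f x\<bar> / e \<le> \<bar>f x\<bar> / e'" using e' by (auto intro!: divide_left_mono)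
    then show "ennreal (\<phi> (\<bar>f x\<bar> / e)) \<le> ennreal (\<phi> (\<bar>f x\<bar> / e'))"
      using e' by (auto intro!: ennreal_leI orl_mono[OF phi])
  qed
  also have "\<dots> \<le> 1" using e' by auto
  finally show ?thesis .
qed

lemma onorm_nonneg:
  assumes ne: "\<exists>e>0. (\<integral>\<^sup>+ x. ennreal (\<phi> (\<bar>f x\<bar> / e)) \<partial>M) \<le> 1"
  shows "0 \<le> orlicz_norm M \<phi> f"
  unfolding orlicz_norm_def by (rule cInf_greatest) (use ne in auto)

lemma orlicz_space_nonempty:
  assumes phi: "orlicz_function \<phi>" and f: "f \<in> orlicz_space M \<phi>"
  shows "\<exists>e>0. (\<integral>\<^sup>+ x. ennreal (\<phi> (\<bar>f x\<bar> / e)) \<partial>M) \<le> 1"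
proof -
  from f obtain l where fm: "f \<in> borel_measurable M" and l: "l > 0"
    and fin: "(\<integral>\<^sup>+ x. ennreal (\<phi> (l * \<bar>f x\<bar>)) \<partial>M) < \<infinity>"
    unfolding orlicz_space_def by auto
  define F where "F i x = ennreal (\<phi> (l * \<bar>f x\<bar> / real (Suc i)))" for i x
  have decx: "F (Suc i) x \<le> F i x" for i x
  proof -
    have "l * \<bar>f x\<bar> / real (Suc (Suc i)) \<le> l * \<bar>f x\<bar> / real (Suc i)"
      using l by (intro divide_left_mono) auto
    then show "F (Suc i) x \<le> F i x" unfolding F_def
      using l by (intro ennreal_leI orl_mono[OF phi]) auto
  qed
  have dec: "decseq F" by (rule decseq_SucI, rule le_funI, rule decx)
  have meas: "F i \<in> borel_measurable M" for i
    unfolding F_def by (intro measurable_compose[OF _ measurable_ennreal] orl_meas[OF phi])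
      (use l in \<open>auto intro!: borel_measurable_divide borel_measurable_times borel_measurable_abs fm\<close>)
  have finF: "(\<integral>\<^sup>+ x. F i x \<partial>M) < \<infinity>" for i
  proof -
    have "(\<integral>\<^sup>+ x. F i x \<partial>M) \<le> (\<integral>\<^sup>+ x. ennreal (\<phi> (l * \<bar>f x\<bar>)) \<partial>M)"
    proof (rule nn_integral_mono)
      fix x
      have "l * \<bar>f x\<bar> / real (Suc i) \<le> l * \<bar>f x\<bar>"
        using l mult_left_mono[of 1 "real (Suc i)" "l*\<bar>f x\<bar>"] by (simp add: divide_le_eq)
      then show "F i x \<le> ennreal (\<phi> (l * \<bar>f x\<bar>))" unfolding F_def
        using l by (intro ennreal_leI orl_mono[OF phi]) auto
    qed
    then show ?thesis using fin by (simp add: le_less_trans)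
  qed
  have inf0: "(INF i. F i x) = 0" for x
  proof -
    have "(\<lambda>i. F i x) \<longlonglongrightarrow> (INF i. F i x)"
      by (intro LIMSEQ_INF decseq_SucI decx)
    moreover have "(\<lambda>i. F i x) \<longlonglongrightarrow> ennreal (\<phi> 0)"
    proof -
      have "(\<lambda>i. l * \<bar>f x\<bar> / real (Suc i)) \<longlonglongrightarrow> 0"
        by (intro tendsto_divide_0[OF tendsto_const] filterlim_at_top_imp_at_infinity
              filterlim_compose[OF filterlim_real_sequentially filterlim_Suc])
      then have "(\<lambda>i. \<phi> (l * \<bar>f x\<bar> / real (Suc i))) \<longlonglongrightarrow> \<phi> 0"
        using l by (intro continuous_on_tendsto_compose[OF orl_cont[OF phi]]) auto
      then show ?thesis unfolding F_def by (rule tendsto_ennrealI)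
    qed
    ultimately show ?thesis using orl_zero[OF phi] LIMSEQ_unique by fastforce
  qed
  have "(\<integral>\<^sup>+ x. (INF i. F i x) \<partial>M) = (INF i. integral\<^sup>N M (F i))"
    by (rule nn_integral_monotone_convergence_INF_decseq[OF dec meas finF])
  then have "(INF i. integral\<^sup>N M (F i)) < 1" by (simp add: inf0)
  then obtain i where i: "integral\<^sup>N M (F i) < 1" by (auto simp: INF_less_iff)
  show ?thesis
  proof (intro exI conjI)
    show "real (Suc i) / l > 0" using l by auto
    have "\<And>x. \<bar>f x\<bar> / (real (Suc i) / l) = l * \<bar>f x\<bar> / real (Suc i)" using l by (simp add: field_simps)
    then show "(\<integral>\<^sup>+ x. ennreal (\<phi> (\<bar>f x\<bar> / (real (Suc i) / l))) \<partial>M) \<le> 1"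
      using i unfolding F_def by (simp add: mult.commute)
  qed
qed



lemma orlicz_space_scale:
  assumes phi: "orlicz_function \<phi>" and f: "f \<in> orlicz_space M \<phi>"
  shows "(\<lambda>\<omega>. c * f \<omega>) \<in> orlicz_space M \<phi>"
proof -
  from f obtain l where fm: "f \<in> borel_measurable M" and l: "l > 0"
    and fin: "(\<integral>\<^sup>+ x. ennreal (\<phi> (l * \<bar>f x\<bar>)) \<partial>M) < \<infinity>"
    unfolding orlicz_space_def by auto
  show ?thesis
  proof (cases "c = 0")
    case True
    then show ?thesis unfolding orlicz_space_def using orl_zero[OF phi] by (auto intro: exI[of _ 1])
  next
    case False
    have "\<And>x. l / \<bar>c\<bar> * \<bar>c * f x\<bar> = l * \<bar>f x\<bar>" using False by (simp add: abs_mult)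
    then show ?thesis unfolding orlicz_space_def using fm l fin False
      by (auto intro!: exI[of _ "l / \<bar>c\<bar>"])
  qed
qed

lemma rademacher_abs:
  assumes "sin (2 ^ k * pi * t) \<noteq> 0"
  shows "\<bar>rademacher k t\<bar> = 1"
  using assms unfolding rademacher_def by (simp add: abs_sgn_eq)

lemma rademacher_zero_countable:
  "countable {t::real. \<exists>k::nat. sin (2 ^ k * pi * t) = 0}"
proof -
  have "{t::real. \<exists>k::nat. sin (2 ^ k * pi * t) = 0} \<subseteq> (\<lambda>(k::nat, i::int). real_of_int i / 2 ^ k) ` UNIV"
  proof
    fix t :: real assume "t \<in> {t::real. \<exists>k::nat. sin (2 ^ k * pi * t) = 0}"
    then obtain k :: nat where "sin (2 ^ k * pi * t) = 0" by auto
    then obtain i :: int where "2 ^ k * pi * t = real_of_int i * pi" by (auto simp: sin_zero_iff_int2)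
    then have "t = real_of_int i / 2 ^ k" by (simp add: field_simps)
    then show "t \<in> (\<lambda>(k::nat, i::int). real_of_int i / 2 ^ k) ` UNIV" by force
  qed
  then show ?thesis by (rule countable_subset) simp
qed

lemma normable_imp_type:
  assumes phi: "orlicz_function \<phi>"
    and pn: "p_normable (orlicz_space M \<phi>) (orlicz_norm M \<phi>) p"
  shows "has_type (orlicz_space M \<phi>) (orlicz_norm M \<phi>) p"
proof -
  let ?X = "orlicz_space M \<phi>" and ?N = "orlicz_norm M \<phi>"
  obtain C where C: "C > 0" and CC: "\<And>n (x::nat \<Rightarrow> _ \<Rightarrow> real). (\<forall>k\<in>{1..n}. x k \<in> ?X) \<Longrightarrow>
      ?N (\<lambda>\<omega>. \<Sum>k=1..n. x k \<omega>) \<le> C * (\<Sum>k=1..n. ?N (x k) powr p) powr (1 / p)"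
    using pn unfolding p_normable_def by blast
  show ?thesis unfolding has_type_def
  proof (intro exI[of _ C] conjI allI impI)
    show "C > 0" by fact
    fix n and x :: "nat \<Rightarrow> _ \<Rightarrow> real"
    assume x: "\<forall>k\<in>{1..n}. x k \<in> ?X"
    let ?S = "(\<Sum>k=1..n. ?N (x k) powr p) powr (1 / p)"
    let ?Z = "{t::real. \<exists>k::nat. sin (2 ^ k * pi * t) = 0}"
    have ae: "AE t in lborel. ennreal (?N (\<lambda>\<omega>. \<Sum>k=1..n. rademacher k t * x k \<omega>)) * indicator {0..1} t
              \<le> ennreal (C * ?S) * indicator {0..1} t"
    proof (rule AE_I'[of ?Z])
      show "?Z \<in> null_sets lborel"
        by (rule countable_imp_null_set_lborel[OF rademacher_zero_countable])
    next
      show "{t \<in> space lborel. \<not> ennreal (?N (\<lambda>\<omega>. \<Sum>k=1..n. rademacher k t * x k \<omega>)) * indicator {0..1} t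
              \<le> ennreal (C * ?S) * indicator {0..1} t} \<subseteq> ?Z"
      proof (rule subsetI, rule ccontr)
        fix t assume t: "t \<in> {t \<in> space lborel. \<not> ennreal (?N (\<lambda>\<omega>. \<Sum>k=1..n. rademacher k t * x k \<omega>)) * indicator {0..1} t
              \<le> ennreal (C * ?S) * indicator {0..1} t}" and nz: "t \<notin> ?Z"
        have r1: "\<bar>rademacher k t\<bar> = 1" for k using nz by (intro rademacher_abs) auto
        have eqN: "?N (\<lambda>\<omega>. rademacher k t * x k \<omega>) = ?N (x k)" for k
          by (rule onorm_abs_cong) (simp add: abs_mult r1)
        have "?N (\<lambda>\<omega>. \<Sum>k=1..n. rademacher k t * x k \<omega>)
              \<le> C * (\<Sum>k=1..n. ?N (\<lambda>\<omega>. rademacher k t * x k \<omega>) powr p) powr (1 / p)"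
          using CC[of n "\<lambda>k \<omega>. rademacher k t * x k \<omega>"] x orlicz_space_scale[OF phi] by auto
        then have "?N (\<lambda>\<omega>. \<Sum>k=1..n. rademacher k t * x k \<omega>) \<le> C * ?S" by (simp add: eqN)
        then have "ennreal (?N (\<lambda>\<omega>. \<Sum>k=1..n. rademacher k t * x k \<omega>)) * indicator {0..1} t
              \<le> ennreal (C * ?S) * indicator {0..1} t"
          by (intro mult_right_mono ennreal_leI) auto
        then show False using t by auto
      qed
    qed
    have "(\<integral>\<^sup>+ t. ennreal (?N (\<lambda>\<omega>. \<Sum>k=1..n. rademacher k t * x k \<omega>)) * indicator {0..1} t \<partial>lborel)
        \<le> (\<integral>\<^sup>+ t. ennreal (C * ?S) * indicator {0..1::real} t \<partial>lborel)"
      by (rule nn_integral_mono_AE) (use ae in simp)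
    also have "\<dots> = ennreal (C * ?S)" by (simp add: nn_integral_cmult_indicator)
    finally show "(\<integral>\<^sup>+ t. ennreal (?N (\<lambda>\<omega>. \<Sum>k=1..n. rademacher k t * x k \<omega>)) * indicator {0..1} t \<partial>lborel)
        \<le> ennreal (C * ?S)" .
  qed
qed



lemma powr_subadd:
  fixes a b p :: real
  assumes p: "0 < p" "p \<le> 1" and ab: "0 \<le> a" "0 \<le> b"
  shows "(a + b) powr p \<le> a powr p + b powr p"
proof (cases "a + b = 0")
  case True then show ?thesis using ab by simp
next
  case False
  define s where "s = a + b"
  have s: "s > 0" using False ab s_def by simp
  have t1: "a / s \<le> (a / s) powr p"
    using powr_mono'[of p 1 "a/s"] p ab s by (simp add: s_def)
  have t2: "b / s \<le> (b / s) powr p"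
    using powr_mono'[of p 1 "b/s"] p ab s by (simp add: s_def)
  have "s powr p = s powr p * (a / s + b / s)" using s by (simp add: s_def add_divide_distrib[symmetric])
  also have "\<dots> \<le> s powr p * ((a / s) powr p + (b / s) powr p)"
    using t1 t2 by (intro mult_left_mono) auto
  also have "\<dots> = a powr p + b powr p"
    using s ab by (simp add: powr_divide distrib_left)
  finally show ?thesis by (simp add: s_def)
qed

lemma powr_sum_le:
  fixes p :: real and a :: "'b \<Rightarrow> real"
  assumes p: "0 < p" "p \<le> 1" and I: "finite I" and a: "\<And>k. k \<in> I \<Longrightarrow> 0 \<le> a k"
  shows "(\<Sum>k\<in>I. a k) powr p \<le> (\<Sum>k\<in>I. a k powr p)"
  using I a
proof (induction I rule: finite_induct)
  case empty then show ?case by simp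
next
  case (insert x F)
  have "(\<Sum>k\<in>insert x F. a k) powr p = (a x + (\<Sum>k\<in>F. a k)) powr p" using insert by simp
  also have "\<dots> \<le> a x powr p + (\<Sum>k\<in>F. a k) powr p"
    using insert by (intro powr_subadd p) (auto intro: sum_nonneg)
  also have "\<dots> \<le> a x powr p + (\<Sum>k\<in>F. a k powr p)" using insert by auto
  finally show ?case using insert by simp
qed

lemma powr_inv_cancel:
  fixes a p :: real assumes "0 < p" "0 \<le> a"
  shows "(a powr (1/p)) powr p = a" and "(a powr p) powr (1/p) = a"
  using assms by (simp_all add: powr_powr)

lemma pointwise_step1:
  fixes \<phi> :: "real \<Rightarrow> real" and \<theta> z :: "nat \<Rightarrow> real"
  assumes phi: "orlicz_function \<phi>" and p: "0 < p" "p \<le> 1" and K: "0 < K" "K \<le> 1"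
    and G: "\<And>u w. 0 < u \<Longrightarrow> v \<le> u \<Longrightarrow> u \<le> w \<Longrightarrow> w \<le> R \<Longrightarrow> K * (w / u) powr p * \<phi> u \<le> \<phi> w"
    and I: "finite I" and th: "\<And>k. k \<in> I \<Longrightarrow> 0 \<le> \<theta> k" "sum \<theta> I = 1"
    and z: "\<And>k. k \<in> I \<Longrightarrow> 0 \<le> z k" "\<And>k. k \<in> I \<Longrightarrow> z k \<le> R"
    and y: "y = (\<Sum>k\<in>I. \<theta> k * z k powr p)" "y > 0"
    and vw: "v \<le> (K^2 * y / 2) powr (1/p)"
  shows "\<phi> ((K^2 * y / 2) powr (1/p)) \<le> (\<Sum>k\<in>I. \<theta> k * \<phi> (z k))"
proof -
  define h where "h = y / 2"
  define u0 where "u0 = h powr (1/p)"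
  define w1 where "w1 = (K^2 * y / 2) powr (1/p)"
  have h: "h > 0" using y by (simp add: h_def)
  have u0: "u0 > 0" using h by (simp add: u0_def)
  have w1: "w1 > 0" using y K by (simp add: w1_def)
  have w1eq: "w1 = (K^2 * h) powr (1/p)" by (simp add: w1_def h_def)
  have w1u0: "w1 \<le> u0" unfolding w1eq u0_def
    using K h p by (intro powr_mono2) (auto simp: power_le_one mult_le_cancel_right1 intro!: mult_left_le_one_le)
  have "K^2 \<le> 1" using K by (simp add: power_le_one)
  have Inot: "I \<noteq> {}" using th(2) by auto
  then obtain k0 where k0: "k0 \<in> I" by auto
  have R0: "0 \<le> R" using z[OF k0] by linarith
  have "y \<le> (\<Sum>k\<in>I. \<theta> k * R powr p)" unfolding y(1)
    using th z p by (intro sum_mono mult_left_mono powr_mono2) auto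
  also have "\<dots> = R powr p" using th(2) by (simp add: sum_distrib_right[symmetric])
  finally have yR: "y \<le> R powr p" .
  have u0R: "u0 \<le> R"
  proof -
    have "u0 \<le> (R powr p) powr (1/p)" unfolding u0_def h_def
      using yR p y by (intro powr_mono2) auto
    then show ?thesis using powr_inv_cancel(2)[OF p(1) R0] by simp
  qed
  define B where "B = {k\<in>I. h \<le> z k powr p}"
  have BI: "B \<subseteq> I" by (auto simp: B_def)
  have finB: "finite B" "finite (I - B)" using I BI by (auto intro: finite_subset)
  have rest: "(\<Sum>k\<in>I - B. \<theta> k * z k powr p) \<le> h"
  proof -
    have "(\<Sum>k\<in>I - B. \<theta> k * z k powr p) \<le> (\<Sum>k\<in>I - B. \<theta> k * h)"
      using th by (intro sum_mono mult_left_mono) (auto simp: B_def)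
    also have "\<dots> = h * (\<Sum>k\<in>I - B. \<theta> k)" by (simp add: sum_distrib_left mult.commute)
    also have "\<dots> \<le> h * 1"
    proof -
      have "(\<Sum>k\<in>I - B. \<theta> k) \<le> (\<Sum>k\<in>I. \<theta> k)" using th I by (intro sum_mono2) auto
      then show ?thesis using h th(2) by (intro mult_left_mono) auto
    qed
    finally show ?thesis by simp
  qed
  have split: "y = (\<Sum>k\<in>B. \<theta> k * z k powr p) + (\<Sum>k\<in>I - B. \<theta> k * z k powr p)"
    unfolding y(1) using sum.subset_diff[OF BI I] by (simp add: add.commute)
  have SB: "h \<le> (\<Sum>k\<in>B. \<theta> k * z k powr p)" using split rest by (simp add: h_def)
  have bigk: "\<theta> k * (K * \<phi> u0 / h) * z k powr p \<le> \<theta> k * \<phi> (z k)" if k: "k \<in> B" for k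
  proof -
    have kI: "k \<in> I" using k BI by auto
    have zk: "u0 \<le> z k"
    proof -
      have "u0 \<le> (z k powr p) powr (1/p)" unfolding u0_def using k h p by (intro powr_mono2) (auto simp: B_def)
      then show ?thesis using powr_inv_cancel(2)[OF p(1) z(1)[OF kI]] by simp
    qed
    have "K * (z k / u0) powr p * \<phi> u0 \<le> \<phi> (z k)"
      using G[of u0 "z k"] u0 zk z(2)[OF kI] vw w1u0 by (auto simp: w1_def)
    moreover have "(z k / u0) powr p = z k powr p / h"
      using powr_inv_cancel(1)[OF p(1), of h] h by (simp add: powr_divide u0_def z(1)[OF kI])
    ultimately have "K * \<phi> u0 / h * z k powr p \<le> \<phi> (z k)" by (simp add: field_simps)
    then have "\<theta> k * (K * \<phi> u0 / h * z k powr p) \<le> \<theta> k * \<phi> (z k)"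
      using th(1)[OF kI] by (rule mult_left_mono)
    then show ?thesis by (simp add: mult_ac)
  qed
  have phiu0: "0 \<le> \<phi> u0" using orl_nonneg[OF phi] u0 by simp
  have "K * \<phi> u0 = (K * \<phi> u0 / h) * h" using h by simp
  also have "\<dots> \<le> (K * \<phi> u0 / h) * (\<Sum>k\<in>B. \<theta> k * z k powr p)"
    using SB h K phiu0 by (intro mult_left_mono) auto
  also have "\<dots> = (\<Sum>k\<in>B. \<theta> k * (K * \<phi> u0 / h) * z k powr p)"
    by (simp add: sum_distrib_left mult_ac)
  also have "\<dots> \<le> (\<Sum>k\<in>B. \<theta> k * \<phi> (z k))" by (intro sum_mono bigk)
  also have "\<dots> \<le> (\<Sum>k\<in>I. \<theta> k * \<phi> (z k))"
    using I BI th z by (intro sum_mono2) (auto intro!: mult_nonneg_nonneg orl_nonneg[OF phi])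
  finally have A: "K * \<phi> u0 \<le> (\<Sum>k\<in>I. \<theta> k * \<phi> (z k))" .
  have "K * (u0 / w1) powr p * \<phi> w1 \<le> \<phi> u0"
    using G[of w1 u0] w1 w1u0 u0R vw by (auto simp: w1_def)
  moreover have "(u0 / w1) powr p = 1 / K^2"
  proof -
    have "(u0 / w1) powr p = h / (K^2 * h)"
      unfolding u0_def w1eq powr_divide[symmetric]
      using h K p by (simp add: powr_powr)
    then show ?thesis using h by simp
  qed
  ultimately have "\<phi> w1 / K \<le> \<phi> u0" using K by (simp add: power2_eq_square field_simps)
  then have "\<phi> w1 \<le> K * \<phi> u0" using K by (simp add: field_simps)
  with A show ?thesis by (simp add: w1_def)
qed



lemma pointwise_main:
  fixes \<phi> :: "real \<Rightarrow> real" and \<theta> z :: "nat \<Rightarrow> real"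
  assumes phi: "orlicz_function \<phi>" and p: "0 < p" "p \<le> 1" and K: "0 < K" "K \<le> 1" and v: "0 \<le> v"
    and G: "\<And>u w. 0 < u \<Longrightarrow> v \<le> u \<Longrightarrow> u \<le> w \<Longrightarrow> w \<le> R \<Longrightarrow> K * (w / u) powr p * \<phi> u \<le> \<phi> w"
    and I: "finite I" and th: "\<And>k. k \<in> I \<Longrightarrow> 0 \<le> \<theta> k" "sum \<theta> I = 1"
    and z: "\<And>k. k \<in> I \<Longrightarrow> 0 \<le> z k" "\<And>k. k \<in> I \<Longrightarrow> z k \<le> R"
  shows "\<phi> ((K^3 * (\<Sum>k\<in>I. \<theta> k * z k powr p) / 4) powr (1/p))
         \<le> (\<Sum>k\<in>I. \<theta> k * \<phi> (z k)) / 2 + 2 * \<phi> v"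
proof -
  define y where "y = (\<Sum>k\<in>I. \<theta> k * z k powr p)"
  define T where "T = (\<Sum>k\<in>I. \<theta> k * \<phi> (z k))"
  define w2 where "w2 = (K^3 * y / 4) powr (1/p)"
  define w1 where "w1 = (K^2 * y / 2) powr (1/p)"
  have y0: "0 \<le> y" unfolding y_def using th z by (auto intro!: sum_nonneg)
  have T0: "0 \<le> T" unfolding T_def using th z by (auto intro!: sum_nonneg mult_nonneg_nonneg orl_nonneg[OF phi])
  have pv: "0 \<le> \<phi> v" using orl_nonneg[OF phi v] .
  have "\<phi> w2 \<le> T / 2 + 2 * \<phi> v"
  proof (cases "y = 0")
    case True
    then show ?thesis using orl_zero[OF phi] T0 pv by (simp add: w2_def)
  next
    case False
    then have ypos: "y > 0" using y0 by simp
    show ?thesis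
    proof (cases "w2 < v")
      case True
      then have "\<phi> w2 \<le> \<phi> v" using orl_mono[OF phi, of w2 v] by (simp add: w2_def)
      then show ?thesis using T0 pv by simp
    next
      case False
      then have vw2: "v \<le> w2" by simp
      have K32: "K^3 / 4 \<le> K^2 / 2"
      proof -
        have "K^3 \<le> K^2" using K by (simp add: power_decreasing)
        moreover have "0 \<le> K^2" by simp
        ultimately show ?thesis by linarith
      qed
      have w21: "w2 \<le> w1" unfolding w1_def w2_def
        using K32 ypos p K by (intro powr_mono2) (auto simp: mult_right_mono)
      have w2pos: "w2 > 0" using ypos K by (simp add: w2_def)
      have A: "\<phi> w1 \<le> T" unfolding w1_def T_def
        by (rule pointwise_step1[OF phi p K G I th z y_def ypos]) (use vw2 w21 in \<open>auto simp: w1_def\<close>)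
      have Inot: "I \<noteq> {}" using th(2) by auto
      then obtain k0 where k0: "k0 \<in> I" by auto
      have R0: "0 \<le> R" using z[OF k0] by linarith
      have "y \<le> (\<Sum>k\<in>I. \<theta> k * R powr p)" unfolding y_def
        using th z p by (intro sum_mono mult_left_mono powr_mono2) auto
      also have "\<dots> = R powr p" using th(2) by (simp add: sum_distrib_right[symmetric])
      finally have yR: "y \<le> R powr p" .
      have w1R: "w1 \<le> R"
      proof -
        have "K^2 \<le> 1" using K by (simp add: power_le_one)
        then have "K^2 / 2 \<le> 1" by simp
        then have "K^2 * y / 2 \<le> y" using ypos by (simp add: mult_le_cancel_right1 mult.commute)
        then have "K^2 * y / 2 \<le> R powr p" using yR by linarith
        then have "w1 \<le> (R powr p) powr (1/p)" unfolding w1_def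
          using p K ypos by (intro powr_mono2) auto
        then show ?thesis using powr_inv_cancel(2)[OF p(1) R0] by simp
      qed
      have "K * (w1 / w2) powr p * \<phi> w2 \<le> \<phi> w1"
        using G[of w2 w1] w2pos vw2 w21 w1R by auto
      moreover have "(w1 / w2) powr p = 2 / K"
      proof -
        have "(w1 / w2) powr p = (K^2 * y / 2) / (K^3 * y / 4)"
          unfolding w1_def w2_def powr_divide[symmetric]
          using ypos K p by (simp add: powr_powr)
        also have "\<dots> = 2 / K" using ypos K by (simp add: power2_eq_square power3_eq_cube field_simps)
        finally show ?thesis .
      qed
      ultimately have "2 * \<phi> w2 \<le> \<phi> w1" using K by simp
      then show ?thesis using A pv by simp
    qed
  qed
  then show ?thesis by (simp add: w2_def y_def T_def)
qed



lemma delta_normable_step: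
  fixes M :: "'a measure" and \<phi> :: "real \<Rightarrow> real" and x :: "nat \<Rightarrow> 'a \<Rightarrow> real" and l :: "nat \<Rightarrow> real"
  assumes phi: "orlicz_function \<phi>" and p: "0 < p" "p \<le> 1" and K: "0 < K" "K \<le> 1" and v: "0 \<le> v"
    and Qdown: "\<And>w w'. Q w \<Longrightarrow> 0 \<le> w' \<Longrightarrow> w' \<le> w \<Longrightarrow> Q w'"
    and G: "\<And>u w. 0 < u \<Longrightarrow> v \<le> u \<Longrightarrow> u \<le> w \<Longrightarrow> Q w \<Longrightarrow> K * (w / u) powr p * \<phi> u \<le> \<phi> w"
    and H: "\<forall>f e. e > 0 \<longrightarrow> (\<integral>\<^sup>+ x. ennreal (\<phi> (\<bar>f x\<bar> / e)) \<partial>M) \<le> 1 \<longrightarrow> (\<forall>x\<in>space M. Q (\<bar>f x\<bar> / e))"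
    and small: "ennreal (\<phi> v) * emeasure M (space M) \<le> ennreal (1/4)"
    and I: "finite I" "I \<noteq> {}"
    and xm: "\<And>k. k \<in> I \<Longrightarrow> x k \<in> borel_measurable M"
    and l: "\<And>k. k \<in> I \<Longrightarrow> l k > 0"
    and xl: "\<And>k. k \<in> I \<Longrightarrow> (\<integral>\<^sup>+ \<omega>. ennreal (\<phi> (\<bar>x k \<omega>\<bar> / l k)) \<partial>M) \<le> 1"
  shows "orlicz_norm M \<phi> (\<lambda>\<omega>. \<Sum>k\<in>I. x k \<omega>) \<le> (4 / K^3) powr (1/p) * (\<Sum>k\<in>I. l k powr p) powr (1/p)"
proof -
  define C where "C = (4 / K^3) powr (1/p)"
  define LP where "LP = (\<Sum>k\<in>I. l k powr p)"
  define \<Lambda> where "\<Lambda> = LP powr (1/p)"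
  define \<theta> where "\<theta> k = l k powr p / LP" for k
  define z where "z k \<omega> = \<bar>x k \<omega>\<bar> / l k" for k \<omega>
  define y where "y \<omega> = (\<Sum>k\<in>I. \<theta> k * z k \<omega> powr p)" for \<omega>
  have C: "C > 0" using K by (simp add: C_def)
  have LP: "LP > 0" unfolding LP_def using I l by (intro sum_pos) (auto simp: less_le)
  have \<Lambda>: "\<Lambda> > 0" using LP by (simp add: \<Lambda>_def)
  have \<Lambda>p: "\<Lambda> powr p = LP" using powr_inv_cancel(1)[OF p(1), of LP] LP by (simp add: \<Lambda>_def)
  have th0: "0 \<le> \<theta> k" for k using LP by (simp add: \<theta>_def)
  have th1: "sum \<theta> I = 1" using LP by (simp add: \<theta>_def LP_def sum_divide_distrib[symmetric])
  have z0: "0 \<le> z k \<omega>" if "k \<in> I" for k \<omega> using l[OF that] by (simp add: z_def)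
  have Qz: "Q (z k \<omega>)" if "k \<in> I" "\<omega> \<in> space M" for k \<omega>
    using H l[OF that(1)] xl[OF that(1)] that(2) unfolding z_def by blast
  have invC: "1 / C = (K^3 / 4) powr (1/p)" using K by (simp add: C_def powr_divide)
  have pw: "\<phi> (\<bar>\<Sum>k\<in>I. x k \<omega>\<bar> / (C * \<Lambda>)) \<le> (\<Sum>k\<in>I. \<theta> k * \<phi> (z k \<omega>)) / 2 + 2 * \<phi> v"
    if \<omega>: "\<omega> \<in> space M" for \<omega>
  proof -
    define s where "s = (\<Sum>k\<in>I. \<bar>x k \<omega>\<bar>)"
    have y0: "0 \<le> y \<omega>" unfolding y_def using th0 by (auto intro!: sum_nonneg)
    have "s powr p \<le> (\<Sum>k\<in>I. \<bar>x k \<omega>\<bar> powr p)" unfolding s_def by (rule powr_sum_le[OF p I(1)]) auto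
    also have "\<dots> = (\<Sum>k\<in>I. LP * (\<theta> k * z k \<omega> powr p))"
    proof (rule sum.cong[OF refl])
      fix k assume k: "k \<in> I"
      have "\<bar>x k \<omega>\<bar> = l k * z k \<omega>" using l[OF k] by (simp add: z_def)
      then have "\<bar>x k \<omega>\<bar> powr p = l k powr p * z k \<omega> powr p" using l[OF k] z0[OF k] by (simp add: powr_mult)
      then show "\<bar>x k \<omega>\<bar> powr p = LP * (\<theta> k * z k \<omega> powr p)" using LP by (simp add: \<theta>_def)
    qed
    also have "\<dots> = LP * y \<omega>" by (simp add: y_def sum_distrib_left)
    finally have sp: "s powr p \<le> LP * y \<omega>" .
    have s0: "0 \<le> s" by (simp add: s_def sum_nonneg)
    have "s = (s powr p) powr (1/p)" using powr_inv_cancel(2)[OF p(1) s0] by simp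
    also have "\<dots> \<le> (LP * y \<omega>) powr (1/p)" using sp p by (intro powr_mono2) auto
    also have "\<dots> = \<Lambda> * y \<omega> powr (1/p)" using LP y0 by (simp add: powr_mult \<Lambda>_def)
    finally have sL: "s \<le> \<Lambda> * y \<omega> powr (1/p)" .
    have "\<bar>\<Sum>k\<in>I. x k \<omega>\<bar> \<le> s" unfolding s_def by (rule sum_abs)
    then have "\<bar>\<Sum>k\<in>I. x k \<omega>\<bar> / (C * \<Lambda>) \<le> \<Lambda> * y \<omega> powr (1/p) / (C * \<Lambda>)"
      using sL C \<Lambda> by (intro divide_right_mono) auto
    also have "\<dots> = y \<omega> powr (1/p) * (1 / C)" using \<Lambda> C by simp
    also have "\<dots> = (K^3 * y \<omega> / 4) powr (1/p)" unfolding invC using y0 K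
      by (simp add: powr_mult[symmetric] mult.commute)
    finally have a1: "\<bar>\<Sum>k\<in>I. x k \<omega>\<bar> / (C * \<Lambda>) \<le> (K^3 * y \<omega> / 4) powr (1/p)" .
    define R where "R = Max ((\<lambda>k. z k \<omega>) ` I)"
    have "R \<in> (\<lambda>k. z k \<omega>) ` I" unfolding R_def using I by (intro Max_in) auto
    then obtain k0 where k0: "k0 \<in> I" "R = z k0 \<omega>" by auto
    have QR: "Q R" using Qz[OF k0(1) \<omega>] k0 by simp
    have zR: "z k \<omega> \<le> R" if "k \<in> I" for k unfolding R_def using I that by (intro Max_ge) auto
    have G': "K * (w / u) powr p * \<phi> u \<le> \<phi> w" if "0 < u" "v \<le> u" "u \<le> w" "w \<le> R" for u w
      using G[OF that(1-3)] Qdown[OF QR, of w] that by auto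
    have "\<phi> ((K^3 * (\<Sum>k\<in>I. \<theta> k * z k \<omega> powr p) / 4) powr (1/p))
         \<le> (\<Sum>k\<in>I. \<theta> k * \<phi> (z k \<omega>)) / 2 + 2 * \<phi> v"
      by (rule pointwise_main[OF phi p K v G' I(1) th0 th1 z0 zR])
    then have a2: "\<phi> ((K^3 * y \<omega> / 4) powr (1/p)) \<le> (\<Sum>k\<in>I. \<theta> k * \<phi> (z k \<omega>)) / 2 + 2 * \<phi> v"
      by (simp add: y_def)
    have "\<phi> (\<bar>\<Sum>k\<in>I. x k \<omega>\<bar> / (C * \<Lambda>)) \<le> \<phi> ((K^3 * y \<omega> / 4) powr (1/p))"
      using a1 C \<Lambda> by (intro orl_mono[OF phi]) auto
    with a2 show ?thesis by linarith
  qed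
  have zm: "(\<lambda>\<omega>. ennreal (\<phi> (z k \<omega>))) \<in> borel_measurable M" if "k \<in> I" for k
    unfolding z_def
    by (intro measurable_compose[OF _ measurable_ennreal] orl_meas[OF phi])
       (use l[OF that] xm[OF that] in auto)
  have "(\<integral>\<^sup>+ \<omega>. ennreal (\<phi> (\<bar>\<Sum>k\<in>I. x k \<omega>\<bar> / (C * \<Lambda>))) \<partial>M)
      \<le> (\<integral>\<^sup>+ \<omega>. (\<Sum>k\<in>I. ennreal (\<theta> k / 2) * ennreal (\<phi> (z k \<omega>))) + ennreal (2 * \<phi> v) \<partial>M)"
  proof (rule nn_integral_mono)
    fix \<omega> assume \<omega>: "\<omega> \<in> space M"
    have nn: "0 \<le> \<theta> k / 2 * \<phi> (z k \<omega>)" if "k \<in> I" for k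
      using th0[of k] orl_nonneg[OF phi z0[OF that]] by simp
    have "ennreal (\<phi> (\<bar>\<Sum>k\<in>I. x k \<omega>\<bar> / (C * \<Lambda>))) \<le> ennreal ((\<Sum>k\<in>I. \<theta> k * \<phi> (z k \<omega>)) / 2 + 2 * \<phi> v)"
      by (rule ennreal_leI[OF pw[OF \<omega>]])
    also have "(\<Sum>k\<in>I. \<theta> k * \<phi> (z k \<omega>)) / 2 = (\<Sum>k\<in>I. \<theta> k / 2 * \<phi> (z k \<omega>))"
      by (simp add: sum_divide_distrib)
    also have "ennreal ((\<Sum>k\<in>I. \<theta> k / 2 * \<phi> (z k \<omega>)) + 2 * \<phi> v)
        = (\<Sum>k\<in>I. ennreal (\<theta> k / 2 * \<phi> (z k \<omega>))) + ennreal (2 * \<phi> v)"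
      using nn orl_nonneg[OF phi v] by (simp add: sum_nonneg)
    also have "(\<Sum>k\<in>I. ennreal (\<theta> k / 2 * \<phi> (z k \<omega>))) = (\<Sum>k\<in>I. ennreal (\<theta> k / 2) * ennreal (\<phi> (z k \<omega>)))"
      using th0 orl_nonneg[OF phi z0] by (intro sum.cong refl ennreal_mult) auto
    finally show "ennreal (\<phi> (\<bar>\<Sum>k\<in>I. x k \<omega>\<bar> / (C * \<Lambda>)))
        \<le> (\<Sum>k\<in>I. ennreal (\<theta> k / 2) * ennreal (\<phi> (z k \<omega>))) + ennreal (2 * \<phi> v)" .
  qed
  also have "\<dots> = (\<Sum>k\<in>I. ennreal (\<theta> k / 2) * (\<integral>\<^sup>+ \<omega>. ennreal (\<phi> (z k \<omega>)) \<partial>M)) + ennreal (2 * \<phi> v) * emeasure M (space M)"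
    using zm by (simp add: nn_integral_add nn_integral_sum nn_integral_cmult)
  also have "\<dots> \<le> (\<Sum>k\<in>I. ennreal (\<theta> k / 2) * 1) + ennreal 2 * (ennreal (\<phi> v) * emeasure M (space M))"
  proof (intro add_mono sum_mono mult_left_mono)
    fix k assume k: "k \<in> I"
    show "(\<integral>\<^sup>+ \<omega>. ennreal (\<phi> (z k \<omega>)) \<partial>M) \<le> 1" using xl[OF k] by (simp add: z_def)
  next
    show "ennreal (2 * \<phi> v) * emeasure M (space M) \<le> ennreal 2 * (ennreal (\<phi> v) * emeasure M (space M))"
      using orl_nonneg[OF phi v] by (simp add: ennreal_mult mult.assoc)
  qed auto
  also have "\<dots> \<le> ennreal (1/2) + ennreal 2 * ennreal (1/4)"
  proof (intro add_mono mult_left_mono order_refl small)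
    have "(\<Sum>k\<in>I. ennreal (\<theta> k / 2) * 1) = ennreal (\<Sum>k\<in>I. \<theta> k / 2)" using th0 by simp
    also have "\<dots> = ennreal (1/2)" using th1 by (simp add: sum_divide_distrib[symmetric])
    finally show "(\<Sum>k\<in>I. ennreal (\<theta> k / 2) * 1) \<le> ennreal (1/2)" by simp
  qed auto
  also have "\<dots> = 1"
  proof -
    have "ennreal 2 * ennreal (1/4) = ennreal (2 * (1/4))" by (rule ennreal_mult[symmetric]) auto
    moreover have "ennreal (1/2) + ennreal (2 * (1/4)) = ennreal (1/2 + 2 * (1/4))"
      by (rule ennreal_plus[symmetric]) auto
    ultimately show ?thesis by simp
  qed
  finally have "(\<integral>\<^sup>+ \<omega>. ennreal (\<phi> (\<bar>\<Sum>k\<in>I. x k \<omega>\<bar> / (C * \<Lambda>))) \<partial>M) \<le> 1" .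
  then have "orlicz_norm M \<phi> (\<lambda>\<omega>. \<Sum>k\<in>I. x k \<omega>) \<le> C * \<Lambda>"
    using C \<Lambda> by (intro onorm_le) auto
  then show ?thesis by (simp add: C_def \<Lambda>_def LP_def)
qed



lemma delta_normable_general:
  fixes M :: "'a measure" and \<phi> :: "real \<Rightarrow> real"
  assumes phi: "orlicz_function \<phi>" and p: "0 < p" "p \<le> 1" and K: "0 < K" "K \<le> 1" and v: "0 \<le> v"
    and Qdown: "\<And>w w'. Q w \<Longrightarrow> 0 \<le> w' \<Longrightarrow> w' \<le> w \<Longrightarrow> Q w'"
    and G: "\<And>u w. 0 < u \<Longrightarrow> v \<le> u \<Longrightarrow> u \<le> w \<Longrightarrow> Q w \<Longrightarrow> K * (w / u) powr p * \<phi> u \<le> \<phi> w"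
    and H: "\<forall>f e. e > 0 \<longrightarrow> (\<integral>\<^sup>+ x. ennreal (\<phi> (\<bar>f x\<bar> / e)) \<partial>M) \<le> 1 \<longrightarrow> (\<forall>x\<in>space M. Q (\<bar>f x\<bar> / e))"
    and small: "ennreal (\<phi> v) * emeasure M (space M) \<le> ennreal (1/4)"
  shows "p_normable (orlicz_space M \<phi>) (orlicz_norm M \<phi>) p"
  unfolding p_normable_def
proof (intro exI[of _ "(4 / K^3) powr (1/p)"] conjI allI impI)
  define C where "C = (4 / K^3) powr (1/p)"
  show "(4 / K^3) powr (1/p) > 0" using K by simp
  fix n and x :: "nat \<Rightarrow> 'a \<Rightarrow> real"
  assume xX: "\<forall>k\<in>{1..n}. x k \<in> orlicz_space M \<phi>"
  show "orlicz_norm M \<phi> (\<lambda>\<omega>. \<Sum>k = 1..n. x k \<omega>)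
        \<le> (4 / K ^ 3) powr (1 / p) * (\<Sum>k = 1..n. orlicz_norm M \<phi> (x k) powr p) powr (1 / p)"
  proof (cases "n = 0")
    case True
    have "{\<epsilon>. \<epsilon> > 0 \<and> (\<integral>\<^sup>+ x. ennreal (\<phi> (\<bar>(0::real)\<bar> / \<epsilon>)) \<partial>M) \<le> 1} = {0<..}"
      using orl_zero[OF phi] by auto
    then have "orlicz_norm M \<phi> (\<lambda>\<omega>. 0) = 0" unfolding orlicz_norm_def by simp
    then show ?thesis using True by simp
  next
    case False
    define I where "I = {1..n}"
    have I: "finite I" "I \<noteq> {}" using False by (auto simp: I_def)
    define lam where "lam k = orlicz_norm M \<phi> (x k)" for k
    have ne: "\<exists>e>0. (\<integral>\<^sup>+ \<omega>. ennreal (\<phi> (\<bar>x k \<omega>\<bar> / e)) \<partial>M) \<le> 1" if "k \<in> I" for k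
      by (rule orlicz_space_nonempty[OF phi]) (use xX that in \<open>auto simp: I_def\<close>)
    have lam0: "0 \<le> lam k" if "k \<in> I" for k unfolding lam_def by (rule onorm_nonneg[OF ne[OF that]])
    have xm: "x k \<in> borel_measurable M" if "k \<in> I" for k
      using xX that by (auto simp: I_def orlicz_space_def)
    define g where "g d = C * (\<Sum>k\<in>I. (lam k + d) powr p) powr (1/p)" for d
    have bound: "orlicz_norm M \<phi> (\<lambda>\<omega>. \<Sum>k\<in>I. x k \<omega>) \<le> g d" if d: "d > 0" for d
    proof -
      have "orlicz_norm M \<phi> (\<lambda>\<omega>. \<Sum>k\<in>I. x k \<omega>) \<le> (4 / K^3) powr (1/p) * (\<Sum>k\<in>I. (lam k + d) powr p) powr (1/p)"
      proof (rule delta_normable_step[where x=x and l="\<lambda>k. lam k + d" and Q=Q and M=M and \<phi>=\<phi> and v=v and K=K and p=p and I=I, OF phi p K v Qdown G H small I xm])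
        fix k assume k: "k \<in> I"
        show "lam k + d > 0" using lam0[OF k] d by simp
        show "(\<integral>\<^sup>+ \<omega>. ennreal (\<phi> (\<bar>x k \<omega>\<bar> / (lam k + d))) \<partial>M) \<le> 1"
          by (rule onorm_gt[OF phi ne[OF k]]) (use d in \<open>simp add: lam_def\<close>)
      qed auto
      then show ?thesis by (simp add: g_def C_def)
    qed
    have t1: "((\<lambda>d. (lam k + d) powr p) \<longlongrightarrow> (lam k + 0) powr p) (at_right 0)" if k: "k \<in> I" for k
    proof (rule tendsto_powr'[OF tendsto_add[OF tendsto_const tendsto_ident_at] tendsto_const])
      have "\<forall>\<^sub>F d in at_right (0::real). 0 < d" by (rule eventually_at_right_less)
      then show "lam k + 0 \<noteq> 0 \<or> 0 < p \<and> (\<forall>\<^sub>F d in at_right 0. 0 \<le> lam k + d)"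
        using p lam0[OF k] by (auto elim: eventually_mono)
    qed
    have t2: "((\<lambda>d. \<Sum>k\<in>I. (lam k + d) powr p) \<longlongrightarrow> (\<Sum>k\<in>I. (lam k + 0) powr p)) (at_right 0)"
      by (rule tendsto_sum) (rule t1)
    have t3: "((\<lambda>d. (\<Sum>k\<in>I. (lam k + d) powr p) powr (1/p)) \<longlongrightarrow> (\<Sum>k\<in>I. (lam k + 0) powr p) powr (1/p)) (at_right 0)"
      by (rule tendsto_powr'[OF t2 tendsto_const]) (use p in \<open>auto intro!: always_eventually sum_nonneg\<close>)
    have lim: "(g \<longlongrightarrow> g 0) (at_right 0)"
      unfolding g_def by (rule tendsto_mult[OF tendsto_const t3])
    have "orlicz_norm M \<phi> (\<lambda>\<omega>. \<Sum>k\<in>I. x k \<omega>) \<le> g 0"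
    proof (rule tendsto_le[OF _ lim tendsto_const])
      show "at_right (0::real) \<noteq> bot" by simp
      show "\<forall>\<^sub>F d in at_right 0. orlicz_norm M \<phi> (\<lambda>\<omega>. \<Sum>k\<in>I. x k \<omega>) \<le> g d"
        using bound eventually_at_right_less[of 0] by (auto elim: eventually_mono)
    qed
    then show ?thesis by (simp add: g_def C_def I_def lam_def)
  qed
qed



lemma growth_to_G:
  fixes u w K p :: real and \<phi> :: "real \<Rightarrow> real"
  assumes "\<And>a u. 1 \<le> a \<Longrightarrow> P u (a * u) \<Longrightarrow> K * a powr p * \<phi> u \<le> \<phi> (a * u)"
    and "0 < u" "u \<le> w" "P u w"
  shows "K * (w / u) powr p * \<phi> u \<le> \<phi> w"
proof -
  have "1 \<le> w / u" using assms(2,3) by (simp add: le_divide_eq)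
  moreover have "w / u * u = w" using assms by simp
  ultimately show ?thesis using assms(1)[of "w/u" u] assms(4) by simp
qed

lemma extend_large:
  fixes \<phi> :: "real \<Rightarrow> real"
  assumes phi: "orlicz_function \<phi>" and p: "0 < p" and K: "0 < K" "K \<le> 1"
    and G: "\<And>u w. 0 < u \<Longrightarrow> v0 \<le> u \<Longrightarrow> u \<le> w \<Longrightarrow> K * (w / u) powr p * \<phi> u \<le> \<phi> w"
    and v1: "0 < v1" "v1 \<le> v0"
    and uw: "v1 \<le> u" "u \<le> w"
  shows "K * (v1 / v0) powr p * (w / u) powr p * \<phi> u \<le> \<phi> w"
proof -
  have u: "u > 0" using v1 uw by simp
  have v0: "v0 > 0" using v1 by simp
  have pu: "0 \<le> \<phi> u" using orl_nonneg[OF phi] u by simp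
  have f1: "(v1 / v0) powr p \<le> 1" using v1 p by (intro powr_le1) auto
  show ?thesis
  proof (cases "v0 \<le> u")
    case True
    have "K * (v1 / v0) powr p * (w / u) powr p * \<phi> u \<le> 1 * (K * (w / u) powr p * \<phi> u)"
    proof -
      have "0 \<le> K * (w / u) powr p * \<phi> u" using K pu by simp
      then have "(v1 / v0) powr p * (K * (w / u) powr p * \<phi> u) \<le> 1 * (K * (w / u) powr p * \<phi> u)"
        using f1 by (intro mult_right_mono) auto
      then show ?thesis by (simp add: mult_ac)
    qed
    also have "\<dots> \<le> \<phi> w" using G[OF u True uw(2)] by simp
    finally show ?thesis .
  next
    case False
    show ?thesis
    proof (cases "v0 \<le> w")
      case True
      have "K * (w / v0) powr p * \<phi> v0 \<le> \<phi> w" using G[OF v0 order_refl True] .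
      moreover have "\<phi> u \<le> \<phi> v0" using orl_mono[OF phi] u False by simp
      moreover have "(v1 / v0) powr p * (w / u) powr p \<le> (w / v0) powr p"
      proof -
        have "(v1 / v0) * (w / u) \<le> w / v0"
          using v1 uw u v0 True by (simp add: field_simps mult_right_mono)
        then have "((v1 / v0) * (w / u)) powr p \<le> (w / v0) powr p"
          using v1 u uw p by (intro powr_mono2) auto
        then show ?thesis by (simp only: powr_mult)
      qed
      ultimately have "K * ((v1 / v0) powr p * (w / u) powr p) * \<phi> u \<le> K * (w / v0) powr p * \<phi> v0"
        using K pu by (intro mult_mono) (auto intro: mult_left_mono)
      with \<open>K * (w / v0) powr p * \<phi> v0 \<le> \<phi> w\<close> show ?thesis by (simp add: mult_ac)
    next
      case False
      have "(v1 / v0) * (w / u) \<le> 1"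
        using v1 uw u v0 False by (simp add: field_simps mult_mono)
      then have "((v1 / v0) * (w / u)) powr p \<le> 1"
        using v1 u uw by (intro powr_le1) (use p in auto)
      then have "(v1 / v0) powr p * (w / u) powr p \<le> 1" by (simp only: powr_mult)
      then have "K * ((v1 / v0) powr p * (w / u) powr p) \<le> 1"
        using K mult_left_le_one_le[of "(v1 / v0) powr p * (w / u) powr p" K] by auto
      then have "K * ((v1 / v0) powr p * (w / u) powr p) * \<phi> u \<le> 1 * \<phi> u"
        using pu by (intro mult_right_mono) auto
      also have "\<dots> \<le> \<phi> w" using orl_mono[OF phi] u uw by simp
      finally show ?thesis by (simp add: mult_ac)
    qed
  qed
qed

lemma extend_small:
  fixes \<phi> :: "real \<Rightarrow> real"
  assumes phi: "orlicz_function \<phi>" and p: "0 < p" and K: "0 < K" "K \<le> 1"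
    and G: "\<And>u w. 0 < u \<Longrightarrow> u \<le> w \<Longrightarrow> w \<le> v0 \<Longrightarrow> K * (w / u) powr p * \<phi> u \<le> \<phi> w"
    and v0: "0 < v0" "v0 \<le> R"
    and uw: "0 < u" "u \<le> w" "w \<le> R"
  shows "K * (v0 / R) powr p * (w / u) powr p * \<phi> u \<le> \<phi> w"
proof -
  have u: "u > 0" using uw by simp
  have R: "R > 0" using v0 by simp
  have pu: "0 \<le> \<phi> u" using orl_nonneg[OF phi] u by simp
  have f1: "(v0 / R) powr p \<le> 1" using v0 p by (intro powr_le1) auto
  show ?thesis
  proof (cases "w \<le> v0")
    case True
    have "K * (v0 / R) powr p * (w / u) powr p * \<phi> u \<le> 1 * (K * (w / u) powr p * \<phi> u)"
    proof -
      have "0 \<le> K * (w / u) powr p * \<phi> u" using K pu by simp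
      then have "(v0 / R) powr p * (K * (w / u) powr p * \<phi> u) \<le> 1 * (K * (w / u) powr p * \<phi> u)"
        using f1 by (intro mult_right_mono) auto
      then show ?thesis by (simp add: mult_ac)
    qed
    also have "\<dots> \<le> \<phi> w" using G[OF u uw(2) True] by simp
    finally show ?thesis .
  next
    case False
    show ?thesis
    proof (cases "u \<le> v0")
      case True
      have "K * (v0 / u) powr p * \<phi> u \<le> \<phi> v0" using G[OF u True order_refl] .
      moreover have "\<phi> v0 \<le> \<phi> w" using orl_mono[OF phi] v0 False by simp
      moreover have "(v0 / R) powr p * (w / u) powr p \<le> (v0 / u) powr p"
      proof -
        have "(v0 / R) * (w / u) \<le> v0 / u"
          using v0 uw u R by (simp add: field_simps mult_left_mono)
        then have "((v0 / R) * (w / u)) powr p \<le> (v0 / u) powr p"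
          using v0 u uw p R by (intro powr_mono2) auto
        then show ?thesis by (simp only: powr_mult)
      qed
      ultimately have "K * ((v0 / R) powr p * (w / u) powr p) * \<phi> u \<le> \<phi> w"
        using K pu by (smt (verit, best) mult_left_mono mult_right_mono)
      then show ?thesis by (simp add: mult_ac)
    next
      case False
      have "v0 * w \<le> u * R" by (rule mult_mono) (use v0 uw False in auto)
      then have "(v0 / R) * (w / u) \<le> 1"
        using u R by (simp add: field_simps mult.commute)
      then have "((v0 / R) * (w / u)) powr p \<le> 1"
        using v0 u uw R by (intro powr_le1) (use p in auto)
      then have "(v0 / R) powr p * (w / u) powr p \<le> 1" by (simp only: powr_mult)
      then have "K * ((v0 / R) powr p * (w / u) powr p) \<le> 1"
        using K mult_left_le_one_le[of "(v0 / R) powr p * (w / u) powr p" K] by auto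
      then have "K * ((v0 / R) powr p * (w / u) powr p) * \<phi> u \<le> 1 * \<phi> u"
        using pu by (intro mult_right_mono) auto
      also have "\<dots> \<le> \<phi> w" using orl_mono[OF phi] u uw by simp
      finally show ?thesis by (simp add: mult_ac)
    qed
  qed
qed



lemma count_space_point_le:
  fixes g :: "'a \<Rightarrow> ennreal"
  shows "g x \<le> (\<integral>\<^sup>+ y. g y \<partial>count_space UNIV)"
proof -
  have "(\<integral>\<^sup>+ y. g x * indicator {x} y \<partial>count_space UNIV) = g x * emeasure (count_space UNIV) {x}"
    by (rule nn_integral_cmult_indicator) simp
  also have "\<dots> = g x" by simp
  finally have eq: "(\<integral>\<^sup>+ y. g x * indicator {x} y \<partial>count_space UNIV) = g x" .
  have "(\<integral>\<^sup>+ y. g x * indicator {x} y \<partial>count_space UNIV) \<le> (\<integral>\<^sup>+ y. g y \<partial>count_space UNIV)"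
    by (rule nn_integral_mono) (auto simp: indicator_def)
  then show ?thesis using eq by simp
qed

lemma delta_imp_normable:
  fixes M :: "'a measure" and \<phi> :: "real \<Rightarrow> real"
  assumes ms: "measure_setting c M" and p: "0 < p" "p \<le> 1" and phi: "orlicz_function \<phi>"
    and ds: "delta_star c p \<phi>"
  shows "p_normable (orlicz_space M \<phi>) (orlicz_norm M \<phi>) p"
proof -
  obtain K0 where K0: "K0 > 0" and gc: "growth_cond c \<phi> K0 p" using ds unfolding delta_star_def by auto
  define K where "K = min K0 1"
  have K: "0 < K" "K \<le> 1" using K0 by (auto simp: K_def)
  have Kle: "K * a * \<phi> u \<le> K0 * a * \<phi> u" if "0 \<le> a" "0 \<le> u" for a u
    using orl_nonneg[OF phi that(2)] that(1) by (intro mult_right_mono) (auto simp: K_def)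
  show ?thesis
  proof (cases c)
    case CaseA
    have gr: "K * a powr p * \<phi> u \<le> \<phi> (a * u)" if "1 \<le> a" "0 \<le> u" for a u
    proof -
      have "K0 * a powr p * \<phi> u \<le> \<phi> (a * u)" using gc that unfolding CaseA growth_cond_def by simp
      moreover have "K * a powr p * \<phi> u \<le> K0 * a powr p * \<phi> u" by (rule Kle) (use that in auto)
      ultimately show ?thesis by linarith
    qed
    have G: "K * (w / u) powr p * \<phi> u \<le> \<phi> w" if "0 < u" "0 \<le> u" "u \<le> w" "True" for u w
      by (rule growth_to_G[where P="\<lambda>u w. 0 \<le> u"]) (use gr that in auto)
    show ?thesis
      by (rule delta_normable_general[where Q="\<lambda>_. True" and v=0, OF phi p K order_refl _ G])
         (auto simp: orl_zero[OF phi])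
  next
    case CaseB
    obtain v0 where v0: "v0 \<ge> 0" and gr0: "\<And>a u. 1 \<le> a \<Longrightarrow> v0 \<le> u \<Longrightarrow> K0 * a powr p * \<phi> u \<le> \<phi> (a * u)"
      using gc unfolding CaseB growth_cond_def by auto
    have gr: "K * a powr p * \<phi> u \<le> \<phi> (a * u)" if "1 \<le> a" "v0 \<le> u" for a u
    proof -
      have "K * a powr p * \<phi> u \<le> K0 * a powr p * \<phi> u" by (rule Kle) (use that v0 in auto)
      then show ?thesis using gr0[OF that] by linarith
    qed
    have G0: "K * (w / u) powr p * \<phi> u \<le> \<phi> w" if "0 < u" "v0 \<le> u" "u \<le> w" for u w
      by (rule growth_to_G[where P="\<lambda>u w. v0 \<le> u"]) (use gr that in auto)
    have fin: "emeasure M (space M) < \<infinity>" "0 < emeasure M (space M)"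
      using ms unfolding CaseB measure_setting_def by auto
    define T where "T = enn2real (emeasure M (space M))"
    have T: "T > 0" "emeasure M (space M) = ennreal T"
      using fin by (auto simp: T_def enn2real_positive_iff less_top[symmetric] ennreal_enn2real_if)
    obtain d where d: "d > 0" "\<And>x. 0 \<le> x \<and> x \<le> d \<longrightarrow> \<phi> x < 1 / (4 * T)"
      using orl_small[OF phi, of "1 / (4 * T)"] T by auto
    have small: "ennreal (\<phi> d) * emeasure M (space M) \<le> ennreal (1/4)"
    proof -
      have "\<phi> d * T \<le> 1 / (4 * T) * T" using d(2)[of d] d(1) T by (intro mult_right_mono) auto
      also have "\<dots> = 1/4" using T by simp
      finally have "\<phi> d * T \<le> 1/4" .
      then show ?thesis using T orl_nonneg[OF phi, of d] d(1) by (simp add: ennreal_mult[symmetric])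
    qed
    obtain K' where K': "0 < K'" "K' \<le> 1"
      and G: "\<And>u w. 0 < u \<Longrightarrow> d \<le> u \<Longrightarrow> u \<le> w \<Longrightarrow> K' * (w / u) powr p * \<phi> u \<le> \<phi> w"
    proof (cases "d \<le> v0")
      case True
      show ?thesis
      proof (rule that[of "K * (d / v0) powr p"])
        show "0 < K * (d / v0) powr p" using K d True by simp
        show "K * (d / v0) powr p \<le> 1"
        proof -
          have "(d / v0) powr p \<le> 1" using d(1) True p by (intro powr_le1) auto
          then show ?thesis using K mult_le_one[of K "(d / v0) powr p"] by auto
        qed
        fix u w assume "0 < u" "d \<le> u" "u \<le> w"
        then show "K * (d / v0) powr p * (w / u) powr p * \<phi> u \<le> \<phi> w"
          using extend_large[OF phi p(1) K G0 d(1) True] by auto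
      qed
    next
      case False
      show ?thesis by (rule that[OF K]) (use G0 False in auto)
    qed
    show ?thesis
      by (rule delta_normable_general[where Q="\<lambda>_. True" and v=d, OF phi p K' _ _ _ _ small])
         (use d(1) G in auto)
  next
    case CaseC
    have M: "M = count_space UNIV" using ms unfolding CaseC measure_setting_def by auto
    obtain v0 where v0: "v0 > 0" and gr0: "\<And>a u. 1 \<le> a \<Longrightarrow> 0 < u \<Longrightarrow> a * u \<le> v0 \<Longrightarrow> K0 * a powr p * \<phi> u \<le> \<phi> (a * u)"
      using gc unfolding CaseC growth_cond_def by auto
    have G0: "K * (w / u) powr p * \<phi> u \<le> \<phi> w" if "0 < u" "u \<le> w" "w \<le> v0" for u w
    proof (rule growth_to_G[where P="\<lambda>u w. 0 < u \<and> w \<le> v0"])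
      fix a u assume "1 \<le> a" "0 < u \<and> a * u \<le> v0"
      then show "K * a powr p * \<phi> u \<le> \<phi> (a * u)"
      proof -
        have "K * a powr p * \<phi> u \<le> K0 * a powr p * \<phi> u" by (rule Kle) (use \<open>0 < u \<and> a * u \<le> v0\<close> in auto)
        then show ?thesis using gr0[of a u] \<open>1 \<le> a\<close> \<open>0 < u \<and> a * u \<le> v0\<close> by linarith
      qed
    qed (use that in auto)
    obtain R0 where R0: "R0 > 0" "\<phi> R0 > 1" using orl_large[OF phi] by auto
    define R where "R = max R0 v0"
    have R: "v0 \<le> R" "R0 \<le> R" by (auto simp: R_def)
    have K': "0 < K * (v0 / R) powr p" "K * (v0 / R) powr p \<le> 1"
    proof -
      have "(v0 / R) powr p \<le> 1" using v0 R p by (intro powr_le1) auto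
      then show "0 < K * (v0 / R) powr p" "K * (v0 / R) powr p \<le> 1"
        using K v0 R mult_le_one[of K "(v0 / R) powr p"] by auto
    qed
    have G: "K * (v0 / R) powr p * (w / u) powr p * \<phi> u \<le> \<phi> w"
      if "0 < u" "0 \<le> u" "u \<le> w" "w \<le> R" for u w
      using extend_small[OF phi p(1) K G0 v0 R(1)] that by auto
    have H: "\<forall>f e. e > 0 \<longrightarrow> (\<integral>\<^sup>+ x. ennreal (\<phi> (\<bar>f x\<bar> / e)) \<partial>M) \<le> 1 \<longrightarrow> (\<forall>x\<in>space M. \<bar>f x\<bar> / e \<le> R)"
    proof (intro allI impI ballI)
      fix f :: "'a \<Rightarrow> real" and e :: real and x
      assume e: "e > 0" and int: "(\<integral>\<^sup>+ x. ennreal (\<phi> (\<bar>f x\<bar> / e)) \<partial>M) \<le> 1"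
      have int': "(\<integral>\<^sup>+ y. ennreal (\<phi> (\<bar>f y\<bar> / e)) \<partial>count_space UNIV) \<le> 1" using int M by simp
      have "ennreal (\<phi> (\<bar>f x\<bar> / e)) \<le> 1"
        by (rule order_trans[OF count_space_point_le[of "\<lambda>x. ennreal (\<phi> (\<bar>f x\<bar> / e))" x] int'])
      then have "\<phi> (\<bar>f x\<bar> / e) \<le> 1" by (simp add: ennreal_le_1)
      then have "\<phi> (\<bar>f x\<bar> / e) \<le> \<phi> R" using R0 orl_mono[OF phi, of R0 R] R by linarith
      then show "\<bar>f x\<bar> / e \<le> R" using orl_le_iff[OF phi, of "\<bar>f x\<bar> / e" R] e R R0 by auto
    qed
    show ?thesis
      by (rule delta_normable_general[where Q="\<lambda>w. w \<le> R" and v=0, OF phi p K' order_refl _ G H])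
         (auto simp: orl_zero[OF phi])
  qed
qed



lemma fm_pos_iff: "A \<in> fmeasurable M \<Longrightarrow> 0 < emeasure M A \<longleftrightarrow> 0 < measure M A"
  by (simp add: emeasure_eq_measure2)

lemma nonatomic_halve:
  assumes na: "nonatomic M" and D: "D \<in> fmeasurable M" "0 < measure M D"
  shows "\<exists>D'\<in>fmeasurable M. D' \<subseteq> D \<and> 0 < measure M D' \<and> measure M D' \<le> measure M D / 2"
proof -
  have "0 < emeasure M D" using D fm_pos_iff by blast
  then obtain B where B: "B \<in> sets M" "B \<subseteq> D" "0 < emeasure M B" "emeasure M B < emeasure M D"
    using na D(1) unfolding nonatomic_def fmeasurable_def by blast
  have Bf: "B \<in> fmeasurable M" using B D(1) by (auto simp: fmeasurable_def)
  have Bm: "0 < measure M B" "measure M B < measure M D"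
    using B Bf D(1) by (auto simp: emeasure_eq_measure2 ennreal_less_iff)
  have Cf: "D - B \<in> fmeasurable M" using Bf D(1) by auto
  have Cm: "measure M (D - B) = measure M D - measure M B"
    using D(1) B by (intro measure_Diff) (auto simp: fmeasurable_def)
  show ?thesis
  proof (cases "measure M B \<le> measure M D / 2")
    case True then show ?thesis using Bf B Bm by auto
  next
    case False then show ?thesis using Cf Cm Bm by (intro bexI[of _ "D - B"]) auto
  qed
qed

lemma nonatomic_small:
  assumes na: "nonatomic M" and E: "E \<in> sets M" "0 < emeasure M E" and dl: "0 < \<delta>"
  shows "\<exists>D\<in>fmeasurable M. D \<subseteq> E \<and> 0 < measure M D \<and> measure M D \<le> \<delta>"
proof -
  obtain E0 where E0: "E0 \<in> fmeasurable M" "E0 \<subseteq> E" "0 < measure M E0"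
  proof (cases "emeasure M E < \<infinity>")
    case True
    then have "E \<in> fmeasurable M" using E by (auto simp: fmeasurable_def)
    then show ?thesis using that E fm_pos_iff by blast
  next
    case False
    then obtain B where B: "B \<in> sets M" "B \<subseteq> E" "0 < emeasure M B" "emeasure M B < emeasure M E"
      using na E unfolding nonatomic_def by blast
    have "emeasure M B < top" using order.strict_trans2[OF B(4) top_greatest] .
    then have "B \<in> fmeasurable M" using B(1) by (auto simp: fmeasurable_def)
    then show ?thesis using that B fm_pos_iff by blast
  qed
  have halv: "\<exists>D\<in>fmeasurable M. D \<subseteq> E0 \<and> 0 < measure M D \<and> measure M D \<le> measure M E0 / 2 ^ j" for j
  proof (induction j)
    case 0 then show ?case using E0 by auto
  next
    case (Suc j)
    then obtain D where D: "D \<in> fmeasurable M" "D \<subseteq> E0" "0 < measure M D" "measure M D \<le> measure M E0 / 2 ^ j"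
      by auto
    obtain D' where D': "D' \<in> fmeasurable M" "D' \<subseteq> D" "0 < measure M D'" "measure M D' \<le> measure M D / 2"
      using nonatomic_halve[OF na D(1,3)] by auto
    have "measure M D / 2 \<le> (measure M E0 / 2 ^ j) / 2" using D(4) by simp
    also have "\<dots> = measure M E0 / 2 ^ Suc j" by simp
    finally have "measure M D' \<le> measure M E0 / 2 ^ Suc j" using D'(4) by linarith
    moreover have "D' \<subseteq> E0" using D D' by auto
    ultimately show ?case using D'(1,3) by blast
  qed
  obtain j :: nat where j: "measure M E0 / \<delta> < 2 ^ j" using real_arch_pow[of 2 "measure M E0 / \<delta>"] by auto
  then have "measure M E0 / 2 ^ j \<le> \<delta>" using dl by (simp add: field_simps)
  moreover obtain D where "D \<in> fmeasurable M" "D \<subseteq> E0" "0 < measure M D" "measure M D \<le> measure M E0 / 2 ^ j"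
    using halv[of j] by blast
  ultimately show ?thesis using E0(2) by (intro bexI[of _ D]) auto
qed



lemma nonatomic_piece:
  assumes na: "nonatomic M" and A: "A \<in> sets M" and t: "0 < t" and tA: "ennreal t \<le> emeasure M A"
  shows "\<exists>B\<in>fmeasurable M. B \<subseteq> A \<and> t / 2 \<le> measure M B \<and> measure M B \<le> t"
proof -
  define adm where "adm B C \<longleftrightarrow> C \<in> fmeasurable M \<and> C \<subseteq> A - B \<and> measure M C \<le> t - measure M B" for B C
  define \<sigma> where "\<sigma> B = Sup (measure M ` {C. adm B C})" for B
  define cho where "cho B = (SOME C. adm B C \<and> \<sigma> B / 2 \<le> measure M C)" for B
  define step where "step B = B \<union> cho B" for B
  define Bs where "Bs j = (step ^^ j) {}" for j
  define inv where "inv B \<longleftrightarrow> B \<in> fmeasurable M \<and> B \<subseteq> A \<and> measure M B \<le> t" for B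
  have bdd: "bdd_above (measure M ` {C. adm B C})" if "inv B" for B
  proof (rule bdd_aboveI[of _ t])
    fix s assume "s \<in> measure M ` {C. adm B C}"
    then obtain C where C: "adm B C" "s = measure M C" by auto
    have "measure M C \<le> t - measure M B" using C(1) by (simp add: adm_def)
    moreover have "0 \<le> measure M B" by (rule measure_nonneg)
    ultimately show "s \<le> t" using C(2) by linarith
  qed
  have adm0: "adm B {}" if "inv B" for B using that by (auto simp: adm_def inv_def)
  have cho: "adm B (cho B) \<and> \<sigma> B / 2 \<le> measure M (cho B)" if iB: "inv B" for B
  proof -
    have "\<exists>C. adm B C \<and> \<sigma> B / 2 \<le> measure M C"
    proof (cases "\<sigma> B \<le> 0")
      case True then show ?thesis using adm0[OF iB] by (intro exI[of _ "{}"]) auto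
    next
      case False
      then have "\<sigma> B / 2 < \<sigma> B" by simp
      then obtain s where "s \<in> measure M ` {C. adm B C}" "\<sigma> B / 2 < s"
        using less_cSup_iff[of "measure M ` {C. adm B C}" "\<sigma> B / 2"] bdd[OF iB] adm0[OF iB]
        unfolding \<sigma>_def by blast
      then show ?thesis by (auto intro: less_imp_le)
    qed
    then show ?thesis unfolding cho_def by (rule someI_ex)
  qed
  have step: "inv (step B) \<and> measure M (step B) = measure M B + measure M (cho B)" if iB: "inv B" for B
  proof -
    have c: "adm B (cho B)" using cho[OF iB] by blast
    have cf: "cho B \<in> fmeasurable M" "cho B \<subseteq> A - B" "measure M (cho B) \<le> t - measure M B"
      using c by (auto simp: adm_def)
    have Bf: "B \<in> fmeasurable M" "B \<subseteq> A" using iB by (auto simp: inv_def)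
    have m: "measure M (step B) = measure M B + measure M (cho B)"
      unfolding step_def using Bf cf by (intro measure_Union) (auto simp: fmeasurable_def)
    moreover have "step B \<in> fmeasurable M" unfolding step_def using Bf cf by auto
    moreover have "step B \<subseteq> A" unfolding step_def using Bf cf by auto
    ultimately show ?thesis using cf by (auto simp: inv_def)
  qed
  have BsSuc: "Bs (Suc j) = step (Bs j)" for j by (simp add: Bs_def)
  have invB: "inv (Bs j)" for j
  proof (induction j)
    case 0 then show ?case using t by (simp add: Bs_def inv_def)
  next
    case (Suc j) then show ?case using step[OF Suc] by (simp add: BsSuc)
  qed
  show ?thesis
  proof (cases "\<exists>j. t / 2 \<le> measure M (Bs j)")
    case True
    then obtain j where "t / 2 \<le> measure M (Bs j)" by auto
    then show ?thesis using invB[of j] by (auto simp: inv_def)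
  next
    case False
    then have small: "measure M (Bs j) < t / 2" for j by (simp add: not_le)
    define U where "U = (\<Union>j. Bs j)"
    have inc: "incseq Bs"
      by (rule incseq_SucI) (simp add: BsSuc step_def)
    have Bsets: "range Bs \<subseteq> sets M" using invB by (auto simp: inv_def)
    have U: "U \<in> sets M" "U \<subseteq> A" using invB by (auto simp: U_def inv_def)
    have "emeasure M U = (SUP j. emeasure M (Bs j))" unfolding U_def
      by (rule SUP_emeasure_incseq[OF Bsets inc, symmetric])
    also have "\<dots> \<le> ennreal (t / 2)"
    proof (rule SUP_least)
      fix j
      have "emeasure M (Bs j) = ennreal (measure M (Bs j))"
        using invB[of j] by (simp add: inv_def emeasure_eq_measure2)
      then show "emeasure M (Bs j) \<le> ennreal (t / 2)" using small[of j] by (simp add: ennreal_leI)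
    qed
    finally have Um: "emeasure M U \<le> ennreal (t / 2)" .
    have pos: "0 < emeasure M (A - U)"
    proof (rule ccontr)
      assume "\<not> 0 < emeasure M (A - U)"
      then have z: "emeasure M (A - U) = 0" by (simp add: not_less)
      have "emeasure M A \<le> emeasure M ((A - U) \<union> U)" using A U by (intro emeasure_mono) auto
      also have "\<dots> \<le> emeasure M (A - U) + emeasure M U" using A U by (intro emeasure_subadditive) auto
      also have "\<dots> \<le> ennreal (t / 2)" using z Um by simp
      finally have "ennreal t \<le> ennreal (t / 2)" using tA by simp
      then show False using t by (simp add: ennreal_le_iff)
    qed
    obtain D where D: "D \<in> fmeasurable M" "D \<subseteq> A - U" "0 < measure M D" "measure M D \<le> t / 2"
      using nonatomic_small[OF na _ pos, of "t/2"] A U t by auto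
    have grow: "measure M (Bs j) + measure M D / 2 \<le> measure M (Bs (Suc j))" for j
    proof -
      have admD: "adm (Bs j) D"
        using D small[of j] by (auto simp: adm_def U_def)
      have "measure M D \<le> \<sigma> (Bs j)" unfolding \<sigma>_def
        by (rule cSup_upper) (use admD bdd[OF invB[of j]] in auto)
      then have "measure M D / 2 \<le> measure M (cho (Bs j))" using cho[OF invB[of j]] by linarith
      then show ?thesis using step[OF invB[of j]] by (simp add: BsSuc)
    qed
    have lin: "real j * (measure M D / 2) \<le> measure M (Bs j)" for j
    proof (induction j)
      case 0 then show ?case by simp
    next
      case (Suc j)
      then show ?case using grow[of j] by (simp add: distrib_right)
    qed
    obtain j :: nat where j: "t / (measure M D / 2) < real j" using reals_Archimedean2 by blast
    then have "t < real j * (measure M D / 2)" using D(3) by (simp add: field_simps)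
    moreover have "measure M (Bs j) \<le> t" using invB[of j] by (simp add: inv_def)
    ultimately show ?thesis using lin[of j] by linarith
  qed
qed



definition fam_ok :: "'a measure \<Rightarrow> nat \<Rightarrow> real \<Rightarrow> bool" where
  "fam_ok M n m \<longleftrightarrow> (\<exists>F. disjoint_family_on F {1..n} \<and>
     (\<forall>k\<in>{1..n}. F k \<in> fmeasurable M \<and> m / 2 \<le> measure M (F k) \<and> measure M (F k) \<le> m))"

lemma nonatomic_family:
  assumes na: "nonatomic M" and m: "0 < m"
  shows "A \<in> sets M \<Longrightarrow> ennreal (real n * m) \<le> emeasure M A \<Longrightarrow>
    \<exists>F. disjoint_family_on F {1..n} \<and>
      (\<forall>k\<in>{1..n}. F k \<in> fmeasurable M \<and> F k \<subseteq> A \<and> m / 2 \<le> measure M (F k) \<and> measure M (F k) \<le> m)"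
proof (induction n arbitrary: A)
  case 0 then show ?case by (intro exI[of _ "\<lambda>_. {}"]) (auto simp: disjoint_family_on_def)
next
  case (Suc n)
  have "ennreal m \<le> ennreal (real (Suc n) * m)" using m by (intro ennreal_leI) auto
  then have "ennreal m \<le> emeasure M A" using Suc.prems(2) by (rule order_trans)
  then obtain B where B: "B \<in> fmeasurable M" "B \<subseteq> A" "m / 2 \<le> measure M B" "measure M B \<le> m"
    using nonatomic_piece[OF na Suc.prems(1) m] by auto
  have AB: "A - B \<in> sets M" using Suc.prems(1) B(1) by auto
  have "ennreal (real n * m) \<le> emeasure M (A - B)"
  proof (cases "emeasure M A = \<infinity>")
    case True
    have "emeasure M (A - B) = emeasure M A - emeasure M B"
      using B Suc.prems(1) by (intro emeasure_Diff) (auto simp: fmeasurable_def)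
    also have "\<dots> = \<infinity>" using True B(1) by (auto simp: fmeasurable_def)
    finally show ?thesis by simp
  next
    case False
    then have Af: "A \<in> fmeasurable M" using Suc.prems(1) by (auto simp: fmeasurable_def top.not_eq_extremum)
    have "ennreal (real (Suc n) * m) \<le> ennreal (measure M A)"
      using Suc.prems(2) Af by (simp add: emeasure_eq_measure2)
    moreover have pos: "0 < real (Suc n) * m" using m by simp
    ultimately have mA: "real (Suc n) * m \<le> measure M A" unfolding ennreal_le_iff2 by linarith
    have "measure M (A - B) = measure M A - measure M B"
      using Af B by (intro measure_Diff) (auto simp: fmeasurable_def)
    then have "real n * m \<le> measure M (A - B)" using mA B(4) by (simp add: distrib_right)
    moreover have "A - B \<in> fmeasurable M" using Af B(1) by (intro fmeasurable_Diff) (auto simp: fmeasurable_def)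
    ultimately show ?thesis by (simp add: emeasure_eq_measure2)
  qed
  then obtain F where F: "disjoint_family_on F {1..n}"
    "\<forall>k\<in>{1..n}. F k \<in> fmeasurable M \<and> F k \<subseteq> A - B \<and> m / 2 \<le> measure M (F k) \<and> measure M (F k) \<le> m"
    using Suc.IH[OF AB] by blast
  define F' where "F' k = (if k = Suc n then B else F k)" for k
  show ?case
  proof (intro exI[of _ F'] conjI)
    show "disjoint_family_on F' {1..Suc n}"
      unfolding disjoint_family_on_def
    proof (intro ballI impI)
      fix i j assume ij: "i \<in> {1..Suc n}" "j \<in> {1..Suc n}" "i \<noteq> j"
      show "F' i \<inter> F' j = {}"
      proof (cases "i = Suc n \<or> j = Suc n")
        case True then show ?thesis using F(2) ij by (auto simp: F'_def)
      next
        case False then show ?thesis using F(1) ij by (auto simp: F'_def disjoint_family_on_def)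
      qed
    qed
  next
    show "\<forall>k\<in>{1..Suc n}. F' k \<in> fmeasurable M \<and> F' k \<subseteq> A \<and> m / 2 \<le> measure M (F' k) \<and> measure M (F' k) \<le> m"
      using F(2) B by (auto simp: F'_def)
  qed
qed

lemma fam_ok_nonatomic:
  assumes na: "nonatomic M" and m: "0 < m" and le: "ennreal (real n * m) \<le> emeasure M (space M)"
  shows "fam_ok M n m"
  using nonatomic_family[OF na m sets.top le] unfolding fam_ok_def by blast

lemma fam_ok_count:
  fixes g :: "nat \<Rightarrow> 'a"
  assumes g: "bij g" and m: "1 \<le> m"
  shows "fam_ok (count_space UNIV :: 'a measure) n m"
proof -
  define j where "j = nat \<lfloor>m\<rfloor>"
  have j1: "m / 2 \<le> real j" "real j \<le> m"
  proof -
    have fl: "real_of_int \<lfloor>m\<rfloor> \<le> m" "m < real_of_int \<lfloor>m\<rfloor> + 1" by linarith+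
    have "1 \<le> \<lfloor>m\<rfloor>" using m by linarith
    then have jr: "real j = real_of_int \<lfloor>m\<rfloor>" by (simp add: j_def)
    show "real j \<le> m" using fl jr by simp
    show "m / 2 \<le> real j" using fl jr \<open>1 \<le> \<lfloor>m\<rfloor>\<close> by linarith
  qed
  define F where "F k = g ` {(k - 1) * j ..< k * j}" for k
  have inj: "inj g" using g by (simp add: bij_def)
  have card: "card (F k) = j" if "1 \<le> k" for k
  proof -
    have "card (F k) = card {(k - 1) * j ..< k * j}" unfolding F_def by (rule card_image) (use inj in \<open>auto intro: inj_on_subset\<close>)
    also have "\<dots> = k * j - (k - 1) * j" by simp
    also have "\<dots> = j" using that by (cases k) (auto simp: algebra_simps)
    finally show ?thesis .
  qed
  have finF: "finite (F k)" for k by (simp add: F_def)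
  show ?thesis unfolding fam_ok_def
  proof (intro exI[of _ F] conjI)
    show "disjoint_family_on F {1..n}"
      unfolding disjoint_family_on_def
    proof (intro ballI impI)
      fix a b :: nat assume ab: "a \<in> {1..n}" "b \<in> {1..n}" "a \<noteq> b"
      have "{(a - 1) * j ..< a * j} \<inter> {(b - 1) * j ..< b * j} = {}"
      proof (cases "a < b")
        case True
        then have "a * j \<le> (b - 1) * j" using ab by (intro mult_right_mono) auto
        then show ?thesis by auto
      next
        case False
        then have "b * j \<le> (a - 1) * j" using ab by (intro mult_right_mono) auto
        then show ?thesis by auto
      qed
      then show "F a \<inter> F b = {}" unfolding F_def by (simp add: image_Int[OF inj, symmetric])
    qed
  next
    show "\<forall>k\<in>{1..n}. F k \<in> fmeasurable (count_space UNIV) \<and> m / 2 \<le> measure (count_space UNIV) (F k)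
          \<and> measure (count_space UNIV) (F k) \<le> m"
    proof
    fix k assume k: "k \<in> {1..n}"
    have mF: "measure (count_space UNIV) (F k) = real j"
      using card[of k] k finF[of k] by (simp add: measure_count_space)
    show "F k \<in> fmeasurable (count_space UNIV) \<and> m / 2 \<le> measure (count_space UNIV) (F k)
          \<and> measure (count_space UNIV) (F k) \<le> m"
      using finF[of k] mF j1 by (auto simp: fmeasurable_def of_nat_less_top)
    qed
  qed
qed



lemma ind_integral:
  assumes phi: "orlicz_function \<phi>" and S: "S \<in> sets M" and e: "e > 0"
  shows "(\<integral>\<^sup>+\<omega>. ennreal (\<phi> (\<bar>indicator S \<omega> :: real\<bar> / e)) \<partial>M) = ennreal (\<phi> (1 / e)) * emeasure M S"
proof -
  have "(\<integral>\<^sup>+\<omega>. ennreal (\<phi> (\<bar>indicator S \<omega> :: real\<bar> / e)) \<partial>M) = (\<integral>\<^sup>+\<omega>. ennreal (\<phi> (1 / e)) * indicator S \<omega> \<partial>M)"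
    by (rule nn_integral_cong) (auto simp: indicator_def orl_zero[OF phi])
  also have "\<dots> = ennreal (\<phi> (1 / e)) * emeasure M S" by (rule nn_integral_cmult_indicator[OF S])
  finally show ?thesis .
qed

lemma ind_in_space:
  assumes phi: "orlicz_function \<phi>" and S: "S \<in> fmeasurable M"
  shows "(indicator S :: 'a \<Rightarrow> real) \<in> orlicz_space M \<phi>"
proof -
  have Ss: "S \<in> sets M" using S by (auto simp: fmeasurable_def)
  have "(\<integral>\<^sup>+\<omega>. ennreal (\<phi> (1 * \<bar>indicator S \<omega> :: real\<bar>)) \<partial>M) = ennreal (\<phi> (1 / 1)) * emeasure M S"
    using ind_integral[OF phi Ss, of 1] by simp
  also have "\<dots> < \<infinity>" using S by (auto simp: fmeasurable_def ennreal_mult_less_top)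
  finally show ?thesis unfolding orlicz_space_def using Ss by (auto intro!: exI[of _ 1])
qed

lemma rademacher_sum_disjoint:
  assumes disj: "disjoint_family_on F {1..n}" and t: "\<And>k. \<bar>rademacher k t\<bar> = 1"
  shows "\<bar>\<Sum>k=1..n. rademacher k t * (indicator (F k) \<omega> :: real)\<bar> = indicator (\<Union>k\<in>{1..n}. F k) \<omega>"
proof (cases "\<exists>k0\<in>{1..n}. \<omega> \<in> F k0")
  case True
  then obtain k0 where k0: "k0 \<in> {1..n}" "\<omega> \<in> F k0" by auto
  have "(\<Sum>k=1..n. rademacher k t * (indicator (F k) \<omega> :: real)) = (\<Sum>k=1..n. if k = k0 then rademacher k0 t else 0)"
  proof (rule sum.cong[OF refl])
    fix k assume k: "k \<in> {1..n}"
    show "rademacher k t * indicator (F k) \<omega> = (if k = k0 then rademacher k0 t else 0)"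
    proof (cases "k = k0")
      case True then show ?thesis using k0 by simp
    next
      case False
      then have "\<omega> \<notin> F k" using disj k k0 unfolding disjoint_family_on_def by blast
      then show ?thesis using False by simp
    qed
  qed
  also have "\<dots> = rademacher k0 t" using k0 by simp
  finally have S: "(\<Sum>k=1..n. rademacher k t * (indicator (F k) \<omega> :: real)) = rademacher k0 t" .
  have ind: "indicator (\<Union>k\<in>{1..n}. F k) \<omega> = (1::real)" using k0 by (auto simp: indicator_def)
  show ?thesis unfolding S ind using t[of k0] by simp
next
  case False
  then show ?thesis by (auto simp: indicator_def intro!: sum.neutral)
qed

lemma type_star:
  fixes M :: "'a measure" and \<phi> :: "real \<Rightarrow> real"
  assumes phi: "orlicz_function \<phi>" and p: "0 < p" and K: "K > 0"
    and ty: "\<And>n x. (\<forall>k\<in>{1..n}. x k \<in> orlicz_space M \<phi>) \<Longrightarrow>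
      (\<integral>\<^sup>+ t. ennreal (orlicz_norm M \<phi> (\<lambda>\<omega>. \<Sum>k=1..n. rademacher k t * x k \<omega>)) * indicator {0..1} t \<partial>lborel)
        \<le> ennreal (K * (\<Sum>k=1..n. orlicz_norm M \<phi> (x k) powr p) powr (1 / p))"
    and s: "s > 0" and n: "n \<ge> 1" and fam: "fam_ok M n (1 / \<phi> s)"
  shows "\<phi> (s / (2 * K * real n powr (1/p))) \<le> 2 * \<phi> s / real n"
proof -
  let ?N = "orlicz_norm M \<phi>"
  have ps: "\<phi> s > 0" using orl_less[OF phi order_refl s] orl_zero[OF phi] by simp
  define m where "m = 1 / \<phi> s"
  have m: "m > 0" using ps by (simp add: m_def)
  obtain F where disj: "disjoint_family_on F {1..n}"
    and F: "\<And>k. k \<in> {1..n} \<Longrightarrow> F k \<in> fmeasurable M \<and> m / 2 \<le> measure M (F k) \<and> measure M (F k) \<le> m"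
    using fam unfolding fam_ok_def m_def by blast
  define x where "x k = (indicator (F k) :: 'a \<Rightarrow> real)" for k
  have Fs: "F k \<in> sets M" if "k \<in> {1..n}" for k using F[OF that] by (auto simp: fmeasurable_def)
  have xX: "\<forall>k\<in>{1..n}. x k \<in> orlicz_space M \<phi>"
    unfolding x_def using F ind_in_space[OF phi] by blast
  have Nx: "?N (x k) \<le> 1 / s" if k: "k \<in> {1..n}" for k
  proof (rule onorm_le)
    show "1 / s > 0" using s by simp
    have "(\<integral>\<^sup>+\<omega>. ennreal (\<phi> (\<bar>x k \<omega>\<bar> / (1 / s))) \<partial>M) = ennreal (\<phi> (1 / (1 / s))) * emeasure M (F k)"
      unfolding x_def by (rule ind_integral[OF phi Fs[OF k]]) (use s in simp)
    also have "\<dots> = ennreal (\<phi> s * measure M (F k))"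
      using F[OF k] ps by (simp add: emeasure_eq_measure2 ennreal_mult)
    also have "\<dots> \<le> ennreal (\<phi> s * m)" using F[OF k] ps by (intro ennreal_leI mult_left_mono) auto
    also have "\<phi> s * m = 1" using ps by (simp add: m_def)
    finally show "(\<integral>\<^sup>+\<omega>. ennreal (\<phi> (\<bar>x k \<omega>\<bar> / (1 / s))) \<partial>M) \<le> 1" by simp
  qed
  have Nx0: "0 \<le> ?N (x k)" if k: "k \<in> {1..n}" for k
    by (rule onorm_nonneg[OF orlicz_space_nonempty[OF phi]]) (use xX k in auto)
  have sumle: "(\<Sum>k=1..n. ?N (x k) powr p) \<le> real n * (1 / s) powr p"
  proof -
    have "(\<Sum>k=1..n. ?N (x k) powr p) \<le> (\<Sum>k=1..n. (1 / s) powr p)"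
      using Nx Nx0 p by (intro sum_mono powr_mono2) auto
    then show ?thesis by simp
  qed
  have bnd: "K * (\<Sum>k=1..n. ?N (x k) powr p) powr (1 / p) \<le> K * real n powr (1/p) / s"
  proof -
    have "(\<Sum>k=1..n. ?N (x k) powr p) powr (1 / p) \<le> (real n * (1 / s) powr p) powr (1/p)"
      using sumle p by (intro powr_mono2) (auto intro!: sum_nonneg)
    also have "\<dots> = real n powr (1/p) * (1 / s)"
      using s p by (simp add: powr_mult powr_powr)
    finally show ?thesis using K by (simp add: mult_left_mono divide_inverse)
  qed
  define U where "U = (\<Union>k\<in>{1..n}. F k)"
  have Uf: "U \<in> fmeasurable M" unfolding U_def using F by (intro fmeasurable.finite_UN) auto
  have Us: "U \<in> sets M" using Uf by (auto simp: fmeasurable_def)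
  have mU: "measure M U = (\<Sum>k=1..n. measure M (F k))"
    unfolding U_def
    by (rule measure_UNION') (use F disj in \<open>auto simp: pairwise_def disjnt_def disjoint_family_on_def\<close>)
  have mU2: "real n * m / 2 \<le> measure M U"
  proof -
    have "(\<Sum>k=1..n. m / 2) \<le> (\<Sum>k=1..n. measure M (F k))" using F by (intro sum_mono) auto
    then show ?thesis using mU by simp
  qed
  let ?Z = "{t::real. \<exists>k::nat. sin (2 ^ k * pi * t) = 0}"
  have ae: "AE t in lborel. ennreal (?N (indicator U)) * indicator {0..1::real} t
      = ennreal (?N (\<lambda>\<omega>. \<Sum>k=1..n. rademacher k t * x k \<omega>)) * indicator {0..1} t"
  proof (rule AE_I'[of ?Z])
    show "?Z \<in> null_sets lborel" by (rule countable_imp_null_set_lborel[OF rademacher_zero_countable])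
    show "{t \<in> space lborel. \<not> (ennreal (?N (indicator U)) * indicator {0..1::real} t
      = ennreal (?N (\<lambda>\<omega>. \<Sum>k=1..n. rademacher k t * x k \<omega>)) * indicator {0..1} t)} \<subseteq> ?Z"
    proof (rule subsetI, rule ccontr)
      fix t assume t: "t \<in> {t \<in> space lborel. \<not> (ennreal (?N (indicator U)) * indicator {0..1::real} t
        = ennreal (?N (\<lambda>\<omega>. \<Sum>k=1..n. rademacher k t * x k \<omega>)) * indicator {0..1} t)}" and nz: "t \<notin> ?Z"
      have r1: "\<bar>rademacher k t\<bar> = 1" for k using nz by (intro rademacher_abs) auto
      have "?N (\<lambda>\<omega>. \<Sum>k=1..n. rademacher k t * x k \<omega>) = ?N (indicator U)"
      proof (rule onorm_abs_cong)
        fix \<omega>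
        have a: "\<bar>\<Sum>k=1..n. rademacher k t * x k \<omega>\<bar> = indicator U \<omega>"
          unfolding x_def U_def by (rule rademacher_sum_disjoint[OF disj r1])
        have b: "\<bar>indicator U \<omega> :: real\<bar> = indicator U \<omega>" by (simp add: indicator_def)
        show "\<bar>\<Sum>k=1..n. rademacher k t * x k \<omega>\<bar> = \<bar>indicator U \<omega> :: real\<bar>" using a b by linarith
      qed
      then show False using t by simp
    qed
  qed
  have "ennreal (?N (indicator U)) = (\<integral>\<^sup>+ t. ennreal (?N (indicator U)) * indicator {0..1::real} t \<partial>lborel)"
    by (simp add: nn_integral_cmult_indicator)
  also have "\<dots> = (\<integral>\<^sup>+ t. ennreal (?N (\<lambda>\<omega>. \<Sum>k=1..n. rademacher k t * x k \<omega>)) * indicator {0..1} t \<partial>lborel)"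
    by (rule nn_integral_cong_AE[OF ae])
  also have "\<dots> \<le> ennreal (K * (\<Sum>k=1..n. ?N (x k) powr p) powr (1 / p))" by (rule ty[OF xX])
  also have "\<dots> \<le> ennreal (K * real n powr (1/p) / s)" by (rule ennreal_leI[OF bnd])
  finally have NU: "?N (indicator U) \<le> K * real n powr (1/p) / s"
    using K s by (simp add: ennreal_le_iff2)  (smt (verit) divide_nonneg_pos mult_nonneg_nonneg powr_ge_zero)
  define e0 where "e0 = 2 * K * real n powr (1/p) / s"
  have npos: "real n powr (1/p) > 0" using n by simp
  have e0: "e0 > 0" using K s npos by (simp add: e0_def)
  have q: "0 < K * real n powr (1/p) / s" using K s npos by simp
  have "e0 = 2 * (K * real n powr (1/p) / s)" by (simp add: e0_def)
  then have "?N (indicator U) < e0" using NU q by linarith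
  then have "(\<integral>\<^sup>+\<omega>. ennreal (\<phi> (\<bar>indicator U \<omega> :: real\<bar> / e0)) \<partial>M) \<le> 1"
    by (intro onorm_gt[OF phi orlicz_space_nonempty[OF phi ind_in_space[OF phi Uf]]])
  then have "ennreal (\<phi> (1 / e0)) * emeasure M U \<le> 1" using ind_integral[OF phi Us e0] by simp
  then have "ennreal (\<phi> (1 / e0) * measure M U) \<le> 1"
    using Uf orl_nonneg[OF phi, of "1/e0"] e0 by (simp add: emeasure_eq_measure2 ennreal_mult)
  then have le1: "\<phi> (1 / e0) * measure M U \<le> 1" by (simp add: ennreal_le_1)
  have pe: "0 \<le> \<phi> (1 / e0)" using orl_nonneg[OF phi, of "1/e0"] e0 by simp
  have nm: "real n * m / 2 > 0" using n m by simp
  have "\<phi> (1 / e0) * (real n * m / 2) \<le> 1" using le1 mU2 pe by (smt (verit) mult_left_mono)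
  then have "\<phi> (1 / e0) \<le> 1 / (real n * m / 2)" using nm by (simp add: field_simps)
  also have "\<dots> = 2 * \<phi> s / real n" using ps n by (simp add: m_def field_simps)
  finally show ?thesis by (simp add: e0_def)
qed



lemma floor_facts:
  fixes x :: real assumes "1 \<le> x"
  shows "1 \<le> nat \<lfloor>x\<rfloor>" "real (nat \<lfloor>x\<rfloor>) \<le> x" "x / 2 \<le> real (nat \<lfloor>x\<rfloor>)"
proof -
  have f: "real_of_int \<lfloor>x\<rfloor> \<le> x" "x < real_of_int \<lfloor>x\<rfloor> + 1" by linarith+
  have "1 \<le> \<lfloor>x\<rfloor>" using assms by linarith
  then have e: "real (nat \<lfloor>x\<rfloor>) = real_of_int \<lfloor>x\<rfloor>" by simp
  show "1 \<le> nat \<lfloor>x\<rfloor>" using \<open>1 \<le> \<lfloor>x\<rfloor>\<close> by linarith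
  show "real (nat \<lfloor>x\<rfloor>) \<le> x" using e f by simp
  show "x / 2 \<le> real (nat \<lfloor>x\<rfloor>)" using e f \<open>1 \<le> \<lfloor>x\<rfloor>\<close> by linarith
qed

lemma star_core:
  fixes \<phi> :: "real \<Rightarrow> real" and n :: nat
  assumes phi: "orlicz_function \<phi>" and p: "0 < p" and L: "0 < L" and u: "0 < u"
    and n: "1 \<le> n" and nx: "real n \<le> (a / L) powr p" and a: "1 \<le> a"
    and star: "\<phi> (a * u / (L * real n powr (1/p))) \<le> 2 * \<phi> (a * u) / real n"
  shows "real n * \<phi> u \<le> 2 * \<phi> (a * u)"
proof -
  have "real n powr (1/p) \<le> ((a / L) powr p) powr (1/p)" using nx p by (intro powr_mono2) auto
  also have "\<dots> = a / L" using p a L by (simp add: powr_powr)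
  finally have "L * real n powr (1/p) \<le> a" using L by (simp add: field_simps)
  moreover have np: "real n powr (1/p) > 0" using n by simp
  ultimately have "u \<le> a * u / (L * real n powr (1/p))" using u L by (simp add: field_simps mult_right_mono)
  then have "\<phi> u \<le> 2 * \<phi> (a * u) / real n" using orl_mono[OF phi] u star by (meson less_imp_le order_trans)
  then show ?thesis using n by (simp add: field_simps)
qed

lemma growth_from_star:
  fixes \<phi> :: "real \<Rightarrow> real"
  assumes phi: "orlicz_function \<phi>" and p: "0 < p" and L: "0 < L" and u: "0 \<le> u" and a: "1 \<le> a"
    and star: "\<And>n. 1 \<le> n \<Longrightarrow> real n \<le> (a / L) powr p \<Longrightarrow> 0 < u \<Longrightarrow>
       \<phi> (a * u / (L * real n powr (1/p))) \<le> 2 * \<phi> (a * u) / real n"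
  shows "1 / (4 * L powr p) * a powr p * \<phi> u \<le> \<phi> (a * u)"
proof (cases "u = 0")
  case True then show ?thesis using orl_zero[OF phi] by simp
next
  case False
  then have u: "u > 0" using u by simp
  define x where "x = (a / L) powr p"
  have xe: "1 / (4 * L powr p) * a powr p = x / 4" using L a by (simp add: x_def powr_divide)
  have pu: "0 \<le> \<phi> u" using orl_nonneg[OF phi] u by simp
  have mono: "\<phi> u \<le> \<phi> (a * u)" using orl_mono[OF phi] u a by simp
  show ?thesis
  proof (cases "x < 1")
    case True
    have "x / 4 * \<phi> u \<le> 1 * \<phi> u" using True pu by (intro mult_right_mono) (auto simp: x_def)
    then have "x / 4 * \<phi> u \<le> \<phi> (a * u)" using mono by linarith
    then show ?thesis unfolding xe .
  next
    case False
    define n where "n = nat \<lfloor>x\<rfloor>"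
    have n: "1 \<le> n" "real n \<le> x" "x / 2 \<le> real n" using floor_facts[of x] False by (auto simp: n_def)
    have "real n * \<phi> u \<le> 2 * \<phi> (a * u)"
      by (rule star_core[OF phi p L u n(1) _ a star]) (use n u in \<open>auto simp: x_def\<close>)
    moreover have "x / 2 * \<phi> u \<le> real n * \<phi> u" using n pu by (intro mult_right_mono) auto
    ultimately have "x / 4 * \<phi> u \<le> \<phi> (a * u)" by simp
    then show ?thesis unfolding xe .
  qed
qed

lemma star_reduce_B:
  fixes \<phi> :: "real \<Rightarrow> real" and n :: nat
  assumes phi: "orlicz_function \<phi>" and p: "0 < p" and L: "0 < L" and u: "0 < u" and a: "1 \<le> a"
    and T: "0 < T" and Tu: "4 < T * \<phi> u"
    and starB: "\<And>n. 1 \<le> n \<Longrightarrow> real n \<le> T * \<phi> (a * u) \<Longrightarrow>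
       \<phi> (a * u / (L * real n powr (1/p))) \<le> 2 * \<phi> (a * u) / real n"
    and n: "1 \<le> n" and nx: "real n \<le> (a / L) powr p"
  shows "\<phi> (a * u / (L * real n powr (1/p))) \<le> 2 * \<phi> (a * u) / real n"
proof (cases "real n \<le> T * \<phi> (a * u)")
  case True then show ?thesis using starB n by auto
next
  case False
  define y where "y = T * \<phi> (a * u)"
  have mono: "\<phi> u \<le> \<phi> (a * u)" using orl_mono[OF phi] u a by simp
  have y4: "4 < y" using Tu mono T unfolding y_def by (smt (verit) mult_left_mono)
  define n1 where "n1 = nat \<lfloor>y\<rfloor>"
  have n1: "1 \<le> n1" "real n1 \<le> y" "y / 2 \<le> real n1" using floor_facts[of y] y4 by (auto simp: n1_def)
  have "real n1 * \<phi> u \<le> 2 * \<phi> (a * u)"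
  proof (rule star_core[OF phi p L u n1(1) _ a])
    show "real n1 \<le> (a / L) powr p" using n1 False nx unfolding y_def by linarith
    show "\<phi> (a * u / (L * real n1 powr (1/p))) \<le> 2 * \<phi> (a * u) / real n1"
      using starB[OF n1(1)] n1(2) by (simp add: y_def)
  qed
  moreover have "y / 2 * \<phi> u \<le> real n1 * \<phi> u"
    using n1 orl_nonneg[OF phi, of u] u by (intro mult_right_mono) auto
  ultimately have "T * \<phi> (a * u) * \<phi> u \<le> 4 * \<phi> (a * u)" by (simp add: y_def)
  moreover have "\<phi> (a * u) > 0" using y4 T unfolding y_def by (smt (verit) mult_nonneg_nonpos)
  ultimately have "T * \<phi> u \<le> 4" by (simp add: mult.commute mult.left_commute)
  then show ?thesis using Tu by simp
qed



lemma type_imp_delta: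
  fixes M :: "'a measure" and \<phi> :: "real \<Rightarrow> real"
  assumes ms: "measure_setting c M" and p: "0 < p" and phi: "orlicz_function \<phi>"
    and ht: "has_type (orlicz_space M \<phi>) (orlicz_norm M \<phi>) p"
  shows "delta_star c p \<phi>"
proof -
  obtain K where K: "K > 0" and ty: "\<And>n x. (\<forall>k\<in>{1..n}. x k \<in> orlicz_space M \<phi>) \<Longrightarrow>
      (\<integral>\<^sup>+ t. ennreal (orlicz_norm M \<phi> (\<lambda>\<omega>. \<Sum>k=1..n. rademacher k t * x k \<omega>)) * indicator {0..1} t \<partial>lborel)
        \<le> ennreal (K * (\<Sum>k=1..n. orlicz_norm M \<phi> (x k) powr p) powr (1 / p))"
    using ht unfolding has_type_def by blast
  define L where "L = 2 * K"
  have L: "L > 0" using K by (simp add: L_def)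
  define K' where "K' = 1 / (4 * L powr p)"
  have K': "K' > 0" using L by (simp add: K'_def)
  have star: "\<phi> (s / (L * real n powr (1/p))) \<le> 2 * \<phi> s / real n"
    if "s > 0" "1 \<le> n" "fam_ok M n (1 / \<phi> s)" for s n
    unfolding L_def by (rule type_star[OF phi p K ty that])
  have phipos: "\<phi> s > 0" if "s > 0" for s using orl_less[OF phi order_refl that] orl_zero[OF phi] by simp
  show ?thesis
  proof (cases c)
    case CaseA
    have na: "nonatomic M" and inf: "emeasure M (space M) = \<infinity>" using ms unfolding CaseA measure_setting_def by auto
    have "K' * a powr p * \<phi> u \<le> \<phi> (a * u)" if a: "1 \<le> a" and u: "0 \<le> u" for a u
      unfolding K'_def
    proof (rule growth_from_star[OF phi p L u a])
      fix n :: nat assume n: "1 \<le> n" and u': "0 < u"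
      have au: "a * u > 0" using a u' by simp
      show "\<phi> (a * u / (L * real n powr (1/p))) \<le> 2 * \<phi> (a * u) / real n"
        by (rule star[OF au n fam_ok_nonatomic[OF na]]) (use phipos[OF au] inf in auto)
    qed
    then show ?thesis unfolding delta_star_def growth_cond_def CaseA using K' by auto
  next
    case CaseB
    have na: "nonatomic M" and fin: "emeasure M (space M) < \<infinity>" "0 < emeasure M (space M)"
      using ms unfolding CaseB measure_setting_def by auto
    define T where "T = enn2real (emeasure M (space M))"
    have T: "T > 0" "emeasure M (space M) = ennreal T"
      using fin by (auto simp: T_def enn2real_positive_iff less_top[symmetric] ennreal_enn2real_if)
    obtain v where v: "v > 0" "\<phi> v > 4 / T" using orl_large[OF phi] by blast
    have "K' * a powr p * \<phi> u \<le> \<phi> (a * u)" if a: "1 \<le> a" and u: "v \<le> u" for a u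
      unfolding K'_def
    proof (rule growth_from_star[OF phi p L _ a])
      show u0: "0 \<le> u" using u v by simp
      fix n :: nat assume n: "1 \<le> n" and nx: "real n \<le> (a / L) powr p" and u': "0 < u"
      have Tu: "4 < T * \<phi> u"
      proof -
        have "\<phi> v \<le> \<phi> u" using orl_mono[OF phi] v u by simp
        then have "4 / T < \<phi> u" using v by linarith
        then show ?thesis using T by (simp add: field_simps)
      qed
      show "\<phi> (a * u / (L * real n powr (1/p))) \<le> 2 * \<phi> (a * u) / real n"
      proof (rule star_reduce_B[OF phi p L u' a T(1) Tu _ n nx])
        fix n1 :: nat assume n1: "1 \<le> n1" "real n1 \<le> T * \<phi> (a * u)"
        have au: "a * u > 0" using a u' by simp
        have pa: "\<phi> (a * u) > 0" using phipos[OF au] .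
        show "\<phi> (a * u / (L * real n1 powr (1/p))) \<le> 2 * \<phi> (a * u) / real n1"
        proof (rule star[OF au n1(1) fam_ok_nonatomic[OF na]])
          show "0 < 1 / \<phi> (a * u)" using pa by simp
          have "real n1 * (1 / \<phi> (a * u)) \<le> T" using n1(2) pa by (simp add: field_simps)
          then show "ennreal (real n1 * (1 / \<phi> (a * u))) \<le> emeasure M (space M)"
            using T by (simp add: ennreal_leI)
        qed
      qed
    qed
    then have "growth_cond c \<phi> K' p" unfolding growth_cond_def CaseB using v
      by (auto intro!: exI[of _ v])
    then show ?thesis unfolding delta_star_def using K' by blast
  next
    case CaseC
    obtain g :: "nat \<Rightarrow> 'a" where g: "bij g" and M: "M = count_space UNIV"
      using ms unfolding CaseC measure_setting_def by auto
    obtain d where d: "d > 0" "\<And>x. 0 \<le> x \<and> x \<le> d \<longrightarrow> \<phi> x < 1" using orl_small[OF phi, of 1] by auto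
    have "K' * a powr p * \<phi> u \<le> \<phi> (a * u)" if a: "1 \<le> a" and u: "0 < u" and au_d: "a * u \<le> d" for a u
      unfolding K'_def
    proof (rule growth_from_star[OF phi p L _ a])
      show "0 \<le> u" using u by simp
      fix n :: nat assume n: "1 \<le> n"
      have au: "a * u > 0" using a u by simp
      have pa: "\<phi> (a * u) > 0" using phipos[OF au] .
      have pl: "\<phi> (a * u) < 1" using d(2)[of "a*u"] au au_d by simp
      show "\<phi> (a * u / (L * real n powr (1/p))) \<le> 2 * \<phi> (a * u) / real n"
        by (rule star[OF au n]) (unfold M, rule fam_ok_count[OF g], use pa pl in \<open>simp add: field_simps\<close>)
    qed
    then have "growth_cond c \<phi> K' p" unfolding growth_cond_def CaseC using d(1)
      by (auto intro!: exI[of _ d])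
    then show ?thesis unfolding delta_star_def using K' by blast
  qed
qed

theorem mainTheorem11:
  fixes M :: "'a measure" and \<phi> :: "real \<Rightarrow> real" and p :: real and c :: mcase
  assumes "measure_setting c M"
    and "0 < p" and "p \<le> 1"
    and "orlicz_function \<phi>"
    and "alpha_index c \<phi> > 0"
  shows "(delta_star c p \<phi> \<longleftrightarrow> p_normable (orlicz_space M \<phi>) (orlicz_norm M \<phi>) p)
       \<and> (p_normable (orlicz_space M \<phi>) (orlicz_norm M \<phi>) p
            \<longleftrightarrow> has_type (orlicz_space M \<phi>) (orlicz_norm M \<phi>) p)"
  using delta_imp_normable[OF assms(1,2,3,4)] normable_imp_type[OF assms(4)]
    type_imp_delta[OF assms(1,2,4)] by blast


end
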